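(* Suppose all speeds are integer multiples of a common factor $\epsilon\in(0,1]$ and the protocol is run with $\alpha=4s_{\max}/\epsilon$ from a (deterministic) initial state $X^0$. Let $T$ be the first round in which the system is in a Nash equilibrium, let $V=\epsilon^2/(8\Delta s_{\max}^3)$ and $Z_t=\Psi_1(X^t)+tV$. Then \[ \mathbb{E}[Z_T] \le Z_0 = \Psi_1(X^0). \]
   Context: $G=(V,E)$ is an undirected graph on $n$ vertices (processors) with maximum degree $\Delta$; $\deg(i)$ is the degree and $d_{ij}=\max\{\deg(i),\deg(j)\}$. Processor $i$ has speed $s_i=n_i\epsilon$ with $n_i$ a positive integer, speeds scaled so that the smallest speed is $1$; $s_{\max}=\max_i s_i$, $\mathcal{S}=\sum_i s_i$. There are $m$ unit tasks; in state $x$, $w_i(x)$ is the number of tasks on $i$ and $\ell_i(x)=w_i(x)/s_i$. Protocol: in each round every task, independently, with $i$ its current processor, chooses a uniformly random neighbor $j$; if $\ell_i-\ell_j>1/s_j$ it moves to $j$ with probability $\frac{\deg(i)}{d_{ij}}\cdot\frac{\ell_i-\ell_j}{\alpha(1/s_i+1/s_j)w_i}$, otherwise stays. $X^t$ is the state after $t$ rounds. $\Psi_1(x)=\sum_i \frac{w_i(x)(w_i(x)+1)}{s_i}-\frac{m^2}{\mathcal{S}}-\frac{mn}{\mathcal{S}}-\frac{n^2}{4\mathcal{S}}+\frac14\sum_i\frac{1}{s_i}$. A state is a Nash equilibrium if $\ell_i-\ell_j\le 1/s_j$ for every ordered pair $(i,j)$ of adjacent processors. *)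

theory Defs
  imports "HOL-Probability.Probability"
begin

text \<open>Vertices (processors) are 0,...,n-1. The graph is given by a symmetric,
irreflexive relation E. A state x assigns to every processor its number of tasks.\<close>

type_synonym state = "nat \<Rightarrow> nat"

definition nbrs :: "nat \<Rightarrow> (nat \<Rightarrow> nat \<Rightarrow> bool) \<Rightarrow> nat \<Rightarrow> nat set" where
  "nbrs n E i = {j. j < n \<and> E i j}"

definition deg :: "nat \<Rightarrow> (nat \<Rightarrow> nat \<Rightarrow> bool) \<Rightarrow> nat \<Rightarrow> nat" where
  "deg n E i = card (nbrs n E i)"

definition max_deg :: "nat \<Rightarrow> (nat \<Rightarrow> nat \<Rightarrow> bool) \<Rightarrow> nat" where
  "max_deg n E = Max (deg n E ` {..<n})"

definition s_max :: "nat \<Rightarrow> (nat \<Rightarrow> real) \<Rightarrow> real" where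
  "s_max n s = Max (s ` {..<n})"

definition S_tot :: "nat \<Rightarrow> (nat \<Rightarrow> real) \<Rightarrow> real" where
  "S_tot n s = (\<Sum>i<n. s i)"

definition load :: "(nat \<Rightarrow> real) \<Rightarrow> state \<Rightarrow> nat \<Rightarrow> real" where
  "load s x i = real (x i) / s i"

definition move_prob :: "nat \<Rightarrow> (nat \<Rightarrow> nat \<Rightarrow> bool) \<Rightarrow> (nat \<Rightarrow> real) \<Rightarrow> real
    \<Rightarrow> state \<Rightarrow> nat \<Rightarrow> nat \<Rightarrow> real" where
  "move_prob n E s \<alpha> x i j =
     real (deg n E i) / real (max (deg n E i) (deg n E j)) *
     ((load s x i - load s x j) / (\<alpha> * (1 / s i + 1 / s j) * real (x i)))"

definition task_dest :: "nat \<Rightarrow> (nat \<Rightarrow> nat \<Rightarrow> bool) \<Rightarrow> (nat \<Rightarrow> real) \<Rightarrow> real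
    \<Rightarrow> state \<Rightarrow> nat \<Rightarrow> nat pmf" where
  "task_dest n E s \<alpha> x i =
     (if nbrs n E i = {} then return_pmf i
      else pmf_of_set (nbrs n E i) \<bind> (\<lambda>j.
        if load s x i - load s x j > 1 / s j
        then map_pmf (\<lambda>b. if b then j else i) (bernoulli_pmf (move_prob n E s \<alpha> x i j))
        else return_pmf i))"

fun seq_pmf :: "'b pmf list \<Rightarrow> 'b list pmf" where
  "seq_pmf [] = return_pmf []"
| "seq_pmf (p # ps) = p \<bind> (\<lambda>y. seq_pmf ps \<bind> (\<lambda>ys. return_pmf (y # ys)))"

definition task_list :: "nat \<Rightarrow> state \<Rightarrow> nat list" where
  "task_list n x = concat (map (\<lambda>i. replicate (x i) i) [0..<n])"

definition step :: "nat \<Rightarrow> (nat \<Rightarrow> nat \<Rightarrow> bool) \<Rightarrow> (nat \<Rightarrow> real) \<Rightarrow> real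
    \<Rightarrow> state \<Rightarrow> state pmf" where
  "step n E s \<alpha> x =
     map_pmf (\<lambda>ds j. count_list ds j) (seq_pmf (map (task_dest n E s \<alpha> x) (task_list n x)))"

definition nash :: "nat \<Rightarrow> (nat \<Rightarrow> nat \<Rightarrow> bool) \<Rightarrow> (nat \<Rightarrow> real) \<Rightarrow> state \<Rightarrow> bool" where
  "nash n E s x \<longleftrightarrow> (\<forall>i<n. \<forall>j<n. E i j \<longrightarrow> load s x i - load s x j \<le> 1 / s j)"

definition psi1 :: "nat \<Rightarrow> (nat \<Rightarrow> real) \<Rightarrow> nat \<Rightarrow> state \<Rightarrow> real" where
  "psi1 n s m x =
     (\<Sum>i<n. real (x i) * (real (x i) + 1) / s i)
     - real m ^ 2 / S_tot n s - real m * real n / S_tot n s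
     - real n ^ 2 / (4 * S_tot n s) + 1/4 * (\<Sum>i<n. 1 / s i)"

text \<open>Z_T along a trajectory: T is the first round at which the state is a Nash
equilibrium; if there is none, Z_T is taken to be infinity.\<close>
definition Z_stop :: "nat \<Rightarrow> (nat \<Rightarrow> nat \<Rightarrow> bool) \<Rightarrow> (nat \<Rightarrow> real) \<Rightarrow> nat \<Rightarrow> real
    \<Rightarrow> (nat \<Rightarrow> state) \<Rightarrow> ennreal" where
  "Z_stop n E s m V xs =
     (if \<exists>t. nash n E s (xs t)
      then ennreal (psi1 n s m (xs (LEAST t. nash n E s (xs t)))
                    + real (LEAST t. nash n E s (xs t)) * V)
      else \<infinity>)"

end

theory Submission
  imports Defs
begin


lemma seq_pmf_set:
  "set_pmf (seq_pmf ps) \<subseteq> {ds. set ds \<subseteq> (\<Union>p\<in>set ps. set_pmf p) \<and> length ds = length ps}"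
proof (induction ps)
  case (Cons p ps) then show ?case by (fastforce simp: subset_iff)
qed simp

lemma nn_seq_Cons:
  "(\<integral>\<^sup>+ds. f ds \<partial>seq_pmf (p#ps)) = (\<integral>\<^sup>+y. \<integral>\<^sup>+ys. f (y#ys) \<partial>seq_pmf ps \<partial>p)"
  by (simp add: nn_integral_return)

lemma nn_ind_pmf: "(\<integral>\<^sup>+y. ennreal (indicator {k} y) \<partial>measure_pmf p) = ennreal (pmf p k)"
  by (simp add: ennreal_indicator emeasure_pmf_single)

lemma sl_nonneg: "0 \<le> (\<Sum>p\<leftarrow>ps. pmf p k)"
  by (induction ps) auto

lemma seq_pmf_count1:
  "(\<integral>\<^sup>+ds. ennreal (real (count_list ds k)) \<partial>seq_pmf ps) = ennreal (\<Sum>p\<leftarrow>ps. pmf p k)"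
proof (induction ps)
  case Nil then show ?case by simp
next
  case (Cons p ps)
  have "(\<integral>\<^sup>+ds. ennreal (real (count_list ds k)) \<partial>seq_pmf (p#ps))
     = (\<integral>\<^sup>+y. (\<integral>\<^sup>+ys. (ennreal (indicator {k} y) + ennreal (real (count_list ys k))) \<partial>seq_pmf ps) \<partial>p)"
    unfolding nn_seq_Cons
    by (intro nn_integral_cong) (auto simp: indicator_def ennreal_plus[symmetric] simp del: ennreal_plus)
  also have "\<dots> = (\<integral>\<^sup>+y. (ennreal (indicator {k} y) + ennreal (\<Sum>p\<leftarrow>ps. pmf p k)) \<partial>p)"
    by (simp add: nn_integral_add Cons measure_pmf.emeasure_space_1)
  also have "\<dots> = ennreal (pmf p k) + ennreal (\<Sum>p\<leftarrow>ps. pmf p k)"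
    by (simp add: nn_integral_add measure_pmf.emeasure_space_1 nn_ind_pmf)
  also have "\<dots> = ennreal (\<Sum>p\<leftarrow>p#ps. pmf p k)"
    by (simp add: ennreal_plus sl_nonneg)
  finally show ?case .
qed

lemma seq_pmf_count2:
  "(\<integral>\<^sup>+ds. ennreal (real (count_list ds k)^2) \<partial>seq_pmf ps)
   = ennreal ((\<Sum>p\<leftarrow>ps. pmf p k)^2 + (\<Sum>p\<leftarrow>ps. pmf p k * (1 - pmf p k)))"
proof (induction ps)
  case Nil then show ?case by simp
next
  case (Cons p ps)
  define mu where "mu = (\<Sum>p\<leftarrow>ps. pmf p k)"
  define v where "v = (\<Sum>p\<leftarrow>ps. pmf p k * (1 - pmf p k))"
  have mu0: "mu \<ge> 0" unfolding mu_def by (rule sl_nonneg)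
  have v0: "v \<ge> 0" unfolding v_def by (intro sum_list_nonneg) (auto simp: pmf_le_1)
  have "(\<integral>\<^sup>+ds. ennreal (real (count_list ds k)^2) \<partial>seq_pmf (p#ps))
     = (\<integral>\<^sup>+y. (\<integral>\<^sup>+ys. (ennreal (indicator {k} y) + ennreal (2 * indicator {k} y) * ennreal (real (count_list ys k))
          + ennreal (real (count_list ys k)^2)) \<partial>seq_pmf ps) \<partial>p)"
    unfolding nn_seq_Cons
    by (intro nn_integral_cong) (auto simp: indicator_def ennreal_plus[symmetric] power2_eq_square
         ennreal_mult[symmetric] algebra_simps simp del: ennreal_plus)
  also have "\<dots> = (\<integral>\<^sup>+y. (ennreal (indicator {k} y) + ennreal (2 * indicator {k} y) * ennreal mu
          + ennreal (mu^2 + v)) \<partial>p)"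
    by (simp add: nn_integral_add nn_integral_cmult Cons seq_pmf_count1 measure_pmf.emeasure_space_1 mu_def v_def)
  also have "\<dots> = (\<integral>\<^sup>+y. (ennreal (indicator {k} y) * ennreal (1 + 2 * mu)
          + ennreal (mu^2 + v)) \<partial>p)"
    by (intro nn_integral_cong) (auto simp: indicator_def ennreal_plus[symmetric] ennreal_mult[symmetric] mu0 simp del: ennreal_plus)
  also have "\<dots> = ennreal (pmf p k) * ennreal (1 + 2 * mu) + ennreal (mu^2 + v)"
    by (simp add: nn_integral_add nn_integral_multc measure_pmf.emeasure_space_1 nn_ind_pmf)
  also have "\<dots> = ennreal (pmf p k * (1 + 2 * mu) + (mu^2 + v))"
    using mu0 v0 by (simp add: ennreal_plus ennreal_mult)
  also have "\<dots> = ennreal ((\<Sum>p\<leftarrow>p#ps. pmf p k)^2 + (\<Sum>p\<leftarrow>p#ps. pmf p k * (1 - pmf p k)))"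
  proof -
    have e: "pmf p k * (1 + 2 * mu) + (mu^2 + v) = (\<Sum>p\<leftarrow>p#ps. pmf p k)^2 + (\<Sum>p\<leftarrow>p#ps. pmf p k * (1 - pmf p k))"
      by (simp add: mu_def v_def power2_eq_square algebra_simps)
    show ?thesis by (simp only: e)
  qed
  finally show ?case .
qed


lemma sum_count_list: "finite A \<Longrightarrow> set ds \<subseteq> A \<Longrightarrow> (\<Sum>j\<in>A. count_list ds j) = length ds"
proof (induction ds)
  case (Cons a ds)
  have "(\<Sum>j\<in>A. count_list (a#ds) j) = (\<Sum>j\<in>A. (if a = j then 1 else 0) + count_list ds j)"
    by (intro sum.cong) auto
  also have "\<dots> = 1 + length ds" using Cons by (simp add: sum.distrib)
  finally show ?case by simp
qed simp

lemma task_list_Suc: "task_list (Suc n) x = task_list n x @ replicate (x n) n"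
  by (simp add: task_list_def)

lemma length_task_list: "length (task_list n x) = (\<Sum>i<n. x i)"
  by (induction n) (auto simp: task_list_Suc task_list_def[of 0])

lemma set_task_list: "set (task_list n x) \<subseteq> {..<n}"
  by (auto simp: task_list_def)

lemma sum_task_list: "(\<Sum>a\<leftarrow>task_list n x. F a) = (\<Sum>i<n. real (x i) * (F i :: real))"
proof (induction n)
  case 0 then show ?case by (simp add: task_list_def)
next
  case (Suc n) then show ?case
    by (simp add: task_list_Suc map_replicate sum_list_replicate del: replicate.simps)
qed

lemma nbrs_sub: "nbrs n E i \<subseteq> {..<n}" by (auto simp: nbrs_def)
lemma finite_nbrs[simp]: "finite (nbrs n E i)" by (rule finite_subset[OF nbrs_sub]) auto

lemma task_dest_set: "i < n \<Longrightarrow> set_pmf (task_dest n E s \<alpha> x i) \<subseteq> {..<n}"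
proof -
  assume i: "i < n"
  show ?thesis
  proof (cases "nbrs n E i = {}")
    case True then show ?thesis using i by (simp add: task_dest_def)
  next
    case False
    have "set_pmf (task_dest n E s \<alpha> x i) \<subseteq> insert i (nbrs n E i)"
      using False by (auto simp: task_dest_def split: if_splits)
    then show ?thesis using i nbrs_sub[of n E i] by blast
  qed
qed

lemma step_set:
  assumes "y \<in> set_pmf (step n E s \<alpha> x)"
  shows "(\<Sum>j<n. y j) = (\<Sum>i<n. x i)"
proof -
  obtain ds where ds: "ds \<in> set_pmf (seq_pmf (map (task_dest n E s \<alpha> x) (task_list n x)))"
    and y: "y = (\<lambda>j. count_list ds j)" using assms by (auto simp: step_def)
  have h: "set ds \<subseteq> (\<Union>p\<in>set (map (task_dest n E s \<alpha> x) (task_list n x)). set_pmf p)"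
    "length ds = length (task_list n x)"
    using subsetD[OF seq_pmf_set ds] by auto
  have "(\<Union>p\<in>set (map (task_dest n E s \<alpha> x) (task_list n x)). set_pmf p) \<subseteq> {..<n}"
  proof
    fix z assume "z \<in> (\<Union>p\<in>set (map (task_dest n E s \<alpha> x) (task_list n x)). set_pmf p)"
    then obtain i where "i \<in> set (task_list n x)" "z \<in> set_pmf (task_dest n E s \<alpha> x i)" by auto
    then show "z \<in> {..<n}" using task_dest_set[of i n] set_task_list[of n x] by blast
  qed
  with h have "set ds \<subseteq> {..<n}" "length ds = length (task_list n x)" by auto
  then show ?thesis using sum_count_list[of "{..<n}" ds] by (simp add: y length_task_list)
qed

lemma seq_pmf_finite:
  assumes "\<And>p. p \<in> set ps \<Longrightarrow> finite (set_pmf p)"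
  shows "finite (set_pmf (seq_pmf ps))"
proof -
  have "finite (\<Union>p\<in>set ps. set_pmf p)" using assms by auto
  from finite_lists_length_eq[OF this, of "length ps"] show ?thesis
    by (rule finite_subset[OF seq_pmf_set[of ps]])
qed

lemma task_dest_finite: "i < n \<Longrightarrow> finite (set_pmf (task_dest n E s \<alpha> x i))"
  by (rule finite_subset[OF task_dest_set]) auto

lemma seq_step_finite:
  "finite (set_pmf (seq_pmf (map (task_dest n E s \<alpha> x) (task_list n x))))"
proof (rule seq_pmf_finite)
  fix p assume "p \<in> set (map (task_dest n E s \<alpha> x) (task_list n x))"
  then obtain i where "i \<in> set (task_list n x)" "p = task_dest n E s \<alpha> x i" by auto
  then show "finite (set_pmf p)" using task_dest_finite[of i n] set_task_list[of n x] by blast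
qed

lemma step_finite: "finite (set_pmf (step n E s \<alpha> x))"
  using seq_step_finite by (simp add: step_def)

definition Qf :: "nat \<Rightarrow> (nat \<Rightarrow> real) \<Rightarrow> state \<Rightarrow> real" where
  "Qf n s y = (\<Sum>k<n. real (y k) * (real (y k) + 1) / s k)"

lemma enn_mul: "0 \<le> a \<Longrightarrow> 0 \<le> b \<Longrightarrow> ennreal a * ennreal b = ennreal (a * b)"
  by (rule ennreal_mult[symmetric])

lemma enn_comb: "(s::real) > 0 \<Longrightarrow> A \<ge> 0 \<Longrightarrow> B \<ge> 0 \<Longrightarrow>
   ennreal A * ennreal (1/s) + ennreal B * ennreal (1/s) = ennreal ((A + B) / s)"
proof -
  assume a: "s > 0" "A \<ge> 0" "B \<ge> 0"
  have "ennreal A * ennreal (1/s) + ennreal B * ennreal (1/s) = ennreal (A * (1/s)) + ennreal (B * (1/s))"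
    using a by (simp only: enn_mul[OF a(2), of "1/s"] enn_mul[OF a(3), of "1/s"] divide_nonneg_nonneg[of 1 s] less_imp_le zero_le_one)
  also have "\<dots> = ennreal (A * (1/s) + B * (1/s))" using a by (intro ennreal_plus[symmetric]) auto
  also have "A * (1/s) + B * (1/s) = (A + B) / s" by (simp add: add_divide_distrib)
  finally show ?thesis .
qed

lemma enn_split: "(s::real) > 0 \<Longrightarrow> c \<ge> 0 \<Longrightarrow>
   ennreal (c * (c + 1) / s) = ennreal (c^2) * ennreal (1/s) + ennreal c * ennreal (1/s)"
proof -
  assume a: "s > 0" "c \<ge> 0"
  have "c * (c + 1) = c^2 + c" by (simp add: power2_eq_square distrib_left)
  then show ?thesis using enn_comb[of s "c^2" c] a by simp
qed

lemma step_Q_nn: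
  fixes x :: state and E :: "nat \<Rightarrow> nat \<Rightarrow> bool" and \<alpha> :: real
  assumes spos: "\<forall>k<n. s k > 0"
  defines "P \<equiv> \<lambda>i k. pmf (task_dest n E s \<alpha> x i) k"
  shows "(\<integral>\<^sup>+y. ennreal (Qf n s y) \<partial>step n E s \<alpha> x)
    = ennreal (\<Sum>k<n. ((\<Sum>i<n. real (x i) * P i k)^2 + (\<Sum>i<n. real (x i) * (P i k * (1 - P i k)))
                 + (\<Sum>i<n. real (x i) * P i k)) / s k)"
proof -
  let ?ps = "map (task_dest n E s \<alpha> x) (task_list n x)"
  have "(\<integral>\<^sup>+y. ennreal (Qf n s y) \<partial>step n E s \<alpha> x)
     = (\<integral>\<^sup>+ds. (\<Sum>k<n. ennreal (real (count_list ds k)^2) * ennreal (1 / s k)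
          + ennreal (real (count_list ds k)) * ennreal (1 / s k)) \<partial>seq_pmf ?ps)"
    unfolding step_def nn_integral_map_pmf
  proof (intro nn_integral_cong)
    fix ds :: "nat list"
    have "ennreal (Qf n s (count_list ds)) = (\<Sum>k<n. ennreal (real (count_list ds k) * (real (count_list ds k) + 1) / s k))"
      unfolding Qf_def using spos by (intro sum_ennreal[symmetric]) auto
    also have "\<dots> = (\<Sum>k<n. ennreal (real (count_list ds k)^2) * ennreal (1 / s k)
          + ennreal (real (count_list ds k)) * ennreal (1 / s k))"
      using spos by (intro sum.cong refl enn_split) auto
    finally show "ennreal (Qf n s (count_list ds)) = (\<Sum>k<n. ennreal (real (count_list ds k)^2) * ennreal (1 / s k)
          + ennreal (real (count_list ds k)) * ennreal (1 / s k))" .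
  qed
  also have "\<dots> = (\<Sum>k<n. ennreal ((\<Sum>p\<leftarrow>?ps. pmf p k)^2 + (\<Sum>p\<leftarrow>?ps. pmf p k * (1 - pmf p k))) * ennreal (1 / s k)
          + ennreal (\<Sum>p\<leftarrow>?ps. pmf p k) * ennreal (1 / s k))"
    by (subst nn_integral_sum) (auto simp: nn_integral_add nn_integral_multc seq_pmf_count1 seq_pmf_count2)
  also have "\<dots> = (\<Sum>k<n. ennreal (((\<Sum>i<n. real (x i) * P i k)^2 + (\<Sum>i<n. real (x i) * (P i k * (1 - P i k)))
                 + (\<Sum>i<n. real (x i) * P i k)) / s k))"
  proof (intro sum.cong refl)
    fix k assume k: "k \<in> {..<n}"
    have a: "(\<Sum>p\<leftarrow>?ps. pmf p k) = (\<Sum>i<n. real (x i) * P i k)"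
      using sum_task_list[of "\<lambda>i. P i k" n x] by (simp add: P_def comp_def)
    have b: "(\<Sum>p\<leftarrow>?ps. pmf p k * (1 - pmf p k)) = (\<Sum>i<n. real (x i) * (P i k * (1 - P i k)))"
      using sum_task_list[of "\<lambda>i. P i k * (1 - P i k)" n x] by (simp add: P_def comp_def)
    have c: "0 \<le> (\<Sum>i<n. real (x i) * (P i k * (1 - P i k)))"
      by (intro sum_nonneg mult_nonneg_nonneg) (auto simp: P_def pmf_le_1)
    have d: "0 \<le> (\<Sum>i<n. real (x i) * P i k)" by (intro sum_nonneg) (auto simp: P_def)
    show "ennreal ((\<Sum>p\<leftarrow>?ps. pmf p k)^2 + (\<Sum>p\<leftarrow>?ps. pmf p k * (1 - pmf p k))) * ennreal (1 / s k)
          + ennreal (\<Sum>p\<leftarrow>?ps. pmf p k) * ennreal (1 / s k)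
       = ennreal (((\<Sum>i<n. real (x i) * P i k)^2 + (\<Sum>i<n. real (x i) * (P i k * (1 - P i k)))
                 + (\<Sum>i<n. real (x i) * P i k)) / s k)"
      unfolding a b using c d spos k by (intro enn_comb) auto
  qed
  also have "\<dots> = ennreal (\<Sum>k<n. ((\<Sum>i<n. real (x i) * P i k)^2 + (\<Sum>i<n. real (x i) * (P i k * (1 - P i k)))
                 + (\<Sum>i<n. real (x i) * P i k)) / s k)"
  proof (rule sum_ennreal[where f="\<lambda>k. ((\<Sum>i<n. real (x i) * P i k)^2 + (\<Sum>i<n. real (x i) * (P i k * (1 - P i k)))
                 + (\<Sum>i<n. real (x i) * P i k)) / s k"])
    fix k assume k: "k \<in> {..<n}"
    have c: "0 \<le> (\<Sum>i<n. real (x i) * (P i k * (1 - P i k)))"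
      by (intro sum_nonneg mult_nonneg_nonneg) (auto simp: P_def pmf_le_1)
    have d: "0 \<le> (\<Sum>i<n. real (x i) * P i k)" by (intro sum_nonneg) (auto simp: P_def)
    show "0 \<le> ((\<Sum>i<n. real (x i) * P i k)^2 + (\<Sum>i<n. real (x i) * (P i k * (1 - P i k)))
                 + (\<Sum>i<n. real (x i) * P i k)) / s k" using c d spos k
      by (intro divide_nonneg_nonneg add_nonneg_nonneg) auto
  qed
  finally show ?thesis .
qed


lemma sq_sum_le_card:
  fixes a :: "'a \<Rightarrow> real"
  shows "(\<Sum>i\<in>A. a i)^2 \<le> real (card A) * (\<Sum>i\<in>A. (a i)^2)"
proof -
  have "0 \<le> (\<Sum>i\<in>A. \<Sum>j\<in>A. (a i - a j)^2)" by (intro sum_nonneg) auto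
  also have "(\<Sum>i\<in>A. \<Sum>j\<in>A. (a i - a j)^2)
      = (\<Sum>i\<in>A. \<Sum>j\<in>A. ((a i)^2 + (a j)^2 - 2 * (a i * a j)))"
    by (intro sum.cong refl) (simp add: power2_diff mult.assoc)
  also have "\<dots> = (\<Sum>i\<in>A. (real (card A) * (a i)^2 + (\<Sum>j\<in>A. (a j)^2) - 2 * (a i * (\<Sum>j\<in>A. a j))))"
    by (intro sum.cong refl) (simp add: sum.distrib sum_subtractf sum_distrib_left)
  also have "\<dots> = 2 * (real (card A) * (\<Sum>i\<in>A. (a i)^2)) - 2 * (\<Sum>i\<in>A. a i)^2"
    by (simp add: sum.distrib sum_subtractf sum_distrib_left[symmetric] sum_distrib_right[symmetric] power2_eq_square)
  finally show ?thesis by simp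
qed

lemma edge_bound:
  fixes si sj smax eps D dd Dl alpha :: real
  assumes si: "1 \<le> si" "si \<le> smax" and sj: "1 \<le> sj" "sj \<le> smax"
    and eps: "0 < eps" "eps \<le> 1"
    and alpha: "alpha = 4 * smax / eps"
    and dd: "1 \<le> dd" "dd \<le> Dl"
    and delta: "D - 1/sj \<ge> eps / (si * sj)"
  shows "D / (dd * alpha * (1/si + 1/sj)) * (2 * (1/sj - D) + D / alpha)
         \<le> - (eps^2 / (8 * Dl * smax^3))"
proof -
  define del where "del = D - 1/sj"
  have smax1: "1 \<le> smax" using si by simp
  have "eps / (smax * sj) \<le> eps / (si * sj)"
    using si sj eps by (intro frac_le) auto
  then have del1: "del \<ge> eps / (smax * sj)" using delta unfolding del_def by linarith
  have del0: "del \<ge> 0" using del1 eps smax1 sj 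
  proof -
    have "0 \<le> eps / (smax * sj)" using eps smax1 sj by simp
    then show ?thesis using del1 by linarith
  qed
  have apos: "alpha > 0" using alpha eps smax1 by simp
  have Dge: "D \<ge> 1/sj" using del0 unfolding del_def by simp
  have Dpos: "D > 0" 
  proof -
    have "0 < 1/sj" using sj by simp
    then show ?thesis using Dge by linarith
  qed
  have e1: "D / alpha = del * (eps / (4* smax)) + eps / (4 * smax * sj)"
    using sj smax1 eps unfolding del_def alpha by (simp add: field_simps)
  have e2: "del * (eps / (4* smax)) \<le> del * (1/4)"
  proof (rule mult_left_mono)
    show "eps / (4* smax) \<le> 1/4" using eps smax1 by (simp add: field_simps)
  qed (rule del0)
  have e3: "eps / (4 * smax * sj) \<le> del / 4" using del1 smax1 sj by (simp add: field_simps)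
  have Dal: "D / alpha \<le> del / 2" using e1 e2 e3 by linarith
  have B: "2 * (D - 1/sj) - D/alpha \<ge> 3/2 * del" using Dal unfolding del_def by simp
  have den: "dd * alpha * (1/si + 1/sj) > 0" using dd apos si sj by (simp add: add_pos_pos)
  have key: "D * del / (1/si + 1/sj) \<ge> eps / (2 * smax^2)"
  proof -
    have "D * del \<ge> (1/sj) * (eps / (si * sj))"
      using Dge Dpos delta unfolding del_def
      by (intro mult_mono) (use si sj eps in auto)
    moreover have "(1/sj) * (eps / (si * sj)) / (1/si + 1/sj) = eps / (sj * (si + sj))"
      using si sj by (simp add: field_simps)
    moreover have "eps / (sj * (si + sj)) \<ge> eps / (2 * smax^2)"
    proof -
      have "sj * (si + sj) \<le> smax * (2 * smax)" using si sj by (intro mult_mono) auto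
      then show ?thesis using eps si sj by (intro divide_left_mono) (auto simp: power2_eq_square)
    qed
    moreover have "(1/sj) * (eps / (si * sj)) / (1/si + 1/sj) \<le> D * del / (1/si + 1/sj)"
      using calculation(1) si sj by (intro divide_right_mono) (auto simp: add_pos_pos)
    ultimately show ?thesis by linarith
  qed
  define F where "F = D / (dd * alpha * (1/si + 1/sj))"
  have g1: "F * (2 * (1/sj - D) + D / alpha) = - (F * (2 * (D - 1/sj) - D / alpha))" by (simp add: algebra_simps)
  have g2: "F * (2 * (D - 1/sj) - D / alpha) \<ge> F * (3/2 * del)"
    using B Dpos den unfolding F_def by (intro mult_left_mono) auto
  have g3: "F * (3/2 * del) = 3/2 / (dd * alpha) * (D * del / (1/si + 1/sj))"
    using den unfolding F_def by (simp add: field_simps)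
  have g4: "3/2 / (dd * alpha) * (D * del / (1/si + 1/sj)) \<ge> 3/2 / (Dl * alpha) * (eps / (2 * smax^2))"
  proof (rule mult_mono)
    show "3/2 / (Dl * alpha) \<le> 3/2 / (dd * alpha)" using dd apos by (intro divide_left_mono) auto
  qed (use key dd apos eps in auto)
  have g5: "3/2 / (Dl * alpha) * (eps / (2 * smax^2)) = 3 * eps^2 / (16 * Dl * smax^3)"
    using eps smax1 dd unfolding alpha by (simp add: field_simps power2_eq_square power3_eq_cube)
  have "D / (dd * alpha * (1/si + 1/sj)) * (2 * (1/sj - D) + D / alpha) \<le> - (3 * eps^2 / (16 * Dl * smax^3))"
    using g1 g2 g3 g4 g5 unfolding F_def by linarith
  moreover have "eps^2 / (8 * Dl * smax^3) \<le> 3 * eps^2 / (16 * Dl * smax^3)"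
    using dd smax1 by (simp add: field_simps)
  ultimately show ?thesis by linarith
qed

lemma sum_le_one_term:
  fixes t :: "'a \<Rightarrow> real"
  assumes "finite A" "a \<in> A" "\<And>b. b \<in> A \<Longrightarrow> t b \<le> 0"
  shows "sum t A \<le> t a"
proof -
  have "sum t A = t a + sum t (A - {a})" using assms by (simp add: sum.remove)
  moreover have "sum t (A - {a}) \<le> 0" using assms by (intro sum_nonpos) auto
  ultimately show ?thesis by linarith
qed

lemma double_sum_le_one_term:
  fixes t :: "nat \<Rightarrow> nat \<Rightarrow> real"
  assumes "i0 < n" "j0 < n" "\<And>i j. i < n \<Longrightarrow> j < n \<Longrightarrow> t i j \<le> 0"
  shows "(\<Sum>i<n. \<Sum>j<n. t i j) \<le> t i0 j0"
proof -
  have "(\<Sum>i<n. \<Sum>j<n. t i j) \<le> (\<Sum>j<n. t i0 j)"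
    using assms by (intro sum_le_one_term) (auto intro!: sum_nonpos)
  also have "\<dots> \<le> t i0 j0" using assms by (intro sum_le_one_term) auto
  finally show ?thesis .
qed

lemma flow_lin:
  fixes x s :: "nat \<Rightarrow> real" and fl :: "nat \<Rightarrow> nat \<Rightarrow> real"
  shows "(\<Sum>k<n. (2 * x k * ((\<Sum>i<n. fl i k) - (\<Sum>j<n. fl k j)) + 2 * (\<Sum>i<n. fl i k)) / s k)
       = (\<Sum>i<n. \<Sum>j<n. fl i j * (2 * (x j / s j - x i / s i + 1 / s j)))"
proof -
  have "(\<Sum>k<n. (2 * x k * ((\<Sum>i<n. fl i k) - (\<Sum>j<n. fl k j)) + 2 * (\<Sum>i<n. fl i k)) / s k)
      = (\<Sum>k<n. \<Sum>i<n. fl i k * (2 * (x k / s k) + 2 / s k)) - (\<Sum>k<n. \<Sum>j<n. fl k j * (2 * (x k / s k)))"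
  proof -
    have e: "(2 * xk * (A - B) + 2 * A) / sk = A * (2 * (xk / sk) + 2 / sk) - B * (2 * (xk / sk))" for xk A B sk :: real
      by (simp add: diff_divide_distrib add_divide_distrib algebra_simps)
    show ?thesis
      by (simp add: e sum_subtractf sum_distrib_right sum_divide_distrib)
  qed
  also have "(\<Sum>k<n. \<Sum>i<n. fl i k * (2 * (x k / s k) + 2 / s k)) = (\<Sum>i<n. \<Sum>k<n. fl i k * (2 * (x k / s k) + 2 / s k))"
    by (rule sum.swap)
  moreover have "(\<Sum>i<n. \<Sum>j<n. fl i j * (2 * (x j / s j - x i / s i + 1 / s j)))
     = (\<Sum>i<n. \<Sum>j<n. (fl i j * (2 * (x j / s j) + 2 / s j) - fl i j * (2 * (x i / s i))))"
    by (intro sum.cong refl) (simp add: algebra_simps)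
  moreover have "\<dots> = (\<Sum>i<n. \<Sum>j<n. fl i j * (2 * (x j / s j) + 2 / s j)) - (\<Sum>i<n. \<Sum>j<n. fl i j * (2 * (x i / s i)))"
    by (simp add: sum_subtractf)
  ultimately show ?thesis by simp
qed

lemma flow_quad:
  fixes fl c :: "nat \<Rightarrow> nat \<Rightarrow> real" and s :: "nat \<Rightarrow> real" and N :: "nat \<Rightarrow> nat set"
  assumes Nsub: "\<forall>i<n. N i \<subseteq> {..<n}"
    and Nsym: "\<forall>i<n. \<forall>j<n. j \<in> N i \<longleftrightarrow> i \<in> N j"
    and fl0: "\<forall>i<n. \<forall>j<n. j \<notin> N i \<longrightarrow> fl i j = 0"
    and flprod: "\<forall>i<n. \<forall>j<n. fl i j * fl j i = 0"
    and spos: "\<forall>i<n. s i > 0"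
    and bound: "\<forall>i<n. \<forall>j<n. (fl i j)^2 * (real (card (N i)) / s i + real (card (N j)) / s j) \<le> fl i j * c i j"
  shows "(\<Sum>k<n. (\<Sum>j<n. fl j k - fl k j)^2 / s k) \<le> (\<Sum>i<n. \<Sum>j<n. fl i j * c i j)"
proof -
  have step: "(\<Sum>j<n. fl j k - fl k j)^2 / s k \<le> (\<Sum>j<n. real (card (N k)) / s k * ((fl j k)^2 + (fl k j)^2))"
    if k: "k < n" for k
  proof -
    have fin: "finite (N k)" using Nsub k finite_subset by blast
    have z: "fl j k - fl k j = 0" if "j \<in> {..<n} - N k" for j
      using that fl0 Nsym k by auto
    have z2: "(fl j k - fl k j)^2 = 0" if "j \<in> {..<n} - N k" for j
      using z[OF that] by simp
    have a: "(\<Sum>j<n. fl j k - fl k j) = (\<Sum>j\<in>N k. fl j k - fl k j)"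
      using Nsub k z by (intro sum.mono_neutral_right) auto
    have b: "(\<Sum>j<n. (fl j k - fl k j)^2) = (\<Sum>j\<in>N k. (fl j k - fl k j)^2)"
      using Nsub k z2 by (intro sum.mono_neutral_right) auto
    have c: "(\<Sum>j<n. (fl j k - fl k j)^2) = (\<Sum>j<n. (fl j k)^2 + (fl k j)^2)"
    proof (intro sum.cong refl)
      fix j assume "j \<in> {..<n}"
      then have "fl j k * fl k j = 0" using flprod k by auto
      then show "(fl j k - fl k j)^2 = (fl j k)^2 + (fl k j)^2" by (simp add: power2_diff)
    qed
    have "(\<Sum>j<n. fl j k - fl k j)^2 \<le> real (card (N k)) * (\<Sum>j<n. (fl j k)^2 + (fl k j)^2)"
      using sq_sum_le_card[of "\<lambda>j. fl j k - fl k j" "N k"] a b c by simp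
    then have "(\<Sum>j<n. fl j k - fl k j)^2 / s k \<le> real (card (N k)) * (\<Sum>j<n. (fl j k)^2 + (fl k j)^2) / s k"
      using spos k by (intro divide_right_mono) auto
    also have "\<dots> = (\<Sum>j<n. real (card (N k)) / s k * ((fl j k)^2 + (fl k j)^2))"
      by (simp add: sum_distrib_left sum_divide_distrib)
    finally show ?thesis .
  qed
  have "(\<Sum>k<n. (\<Sum>j<n. fl j k - fl k j)^2 / s k) \<le> (\<Sum>k<n. \<Sum>j<n. real (card (N k)) / s k * ((fl j k)^2 + (fl k j)^2))"
    using step by (intro sum_mono) auto
  also have "\<dots> = (\<Sum>k<n. \<Sum>j<n. real (card (N k)) / s k * (fl j k)^2) + (\<Sum>k<n. \<Sum>j<n. real (card (N k)) / s k * (fl k j)^2)"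
    by (simp add: distrib_left sum.distrib)
  also have "(\<Sum>k<n. \<Sum>j<n. real (card (N k)) / s k * (fl j k)^2) = (\<Sum>j<n. \<Sum>k<n. real (card (N k)) / s k * (fl j k)^2)"
    by (rule sum.swap)
  also have "(\<Sum>j<n. \<Sum>k<n. real (card (N k)) / s k * (fl j k)^2) + (\<Sum>k<n. \<Sum>j<n. real (card (N k)) / s k * (fl k j)^2)
      = (\<Sum>i<n. \<Sum>j<n. (fl i j)^2 * (real (card (N i)) / s i + real (card (N j)) / s j))"
    by (simp add: sum.distrib[symmetric] algebra_simps)
  also have "\<dots> \<le> (\<Sum>i<n. \<Sum>j<n. fl i j * c i j)"
    using bound by (intro sum_mono) auto
  finally show ?thesis .
qed

lemma var_step:
  fixes x s :: "nat \<Rightarrow> real" and P fl :: "nat \<Rightarrow> nat \<Rightarrow> real"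
  assumes xnn: "\<forall>i<n. x i \<ge> 0" and Pnn: "\<forall>i<n. \<forall>k<n. P i k \<ge> 0"
    and Psum: "\<forall>i<n. (\<Sum>k<n. P i k) = 1" and spos: "\<forall>i<n. s i > 0"
    and fl: "\<And>i k. fl i k = (if i = k then 0 else x i * P i k)"
  shows "(\<Sum>k<n. ((\<Sum>i<n. x i * P i k)^2 + (\<Sum>i<n. x i * (P i k * (1 - P i k))) + (\<Sum>i<n. x i * P i k)) / s k)
     \<le> (\<Sum>k<n. ((x k + ((\<Sum>i<n. fl i k) - (\<Sum>j<n. fl k j)))^2 + x k + 2 * (\<Sum>i<n. fl i k)) / s k)"
proof (intro sum_mono)
  fix k assume "k \<in> {..<n}"
  then have k: "k < n" by simp
  have Ple1: "P i j \<le> 1" if "i < n" "j < n" for i j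
  proof -
    have "P i j \<le> (\<Sum>k<n. P i k)" using Pnn that by (intro member_le_sum) auto
    then show ?thesis using Psum that by simp
  qed
  define mu where "mu = (\<Sum>i<n. x i * P i k)"
  define inn where "inn = (\<Sum>i<n. fl i k)"
  define out where "out = (\<Sum>j<n. fl k j)"
  have inn_eq: "inn = mu - x k * P k k"
  proof -
    have "mu = x k * P k k + (\<Sum>i\<in>{..<n} - {k}. x i * P i k)"
      unfolding mu_def using k by (simp add: sum.remove)
    moreover have "inn = fl k k + (\<Sum>i\<in>{..<n} - {k}. fl i k)"
      unfolding inn_def using k by (simp add: sum.remove)
    moreover have "(\<Sum>i\<in>{..<n} - {k}. fl i k) = (\<Sum>i\<in>{..<n} - {k}. x i * P i k)"
      by (intro sum.cong) (auto simp: fl)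
    ultimately show ?thesis by (simp add: fl)
  qed
  have out_eq: "out = x k - x k * P k k"
  proof -
    have h1: "1 = P k k + (\<Sum>j\<in>{..<n} - {k}. P k j)"
      using Psum k by (simp add: sum.remove)
    have h2: "out = fl k k + (\<Sum>j\<in>{..<n} - {k}. fl k j)"
      unfolding out_def using k by (simp add: sum.remove)
    have h3: "(\<Sum>j\<in>{..<n} - {k}. fl k j) = x k * (\<Sum>j\<in>{..<n} - {k}. P k j)"
      by (simp add: fl sum_distrib_left)
    have "x k = x k * P k k + x k * (\<Sum>j\<in>{..<n} - {k}. P k j)"
      using h1 by (metis distrib_left mult_1_right)
    then show ?thesis using h2 h3 by (simp add: fl)
  qed
  have var: "(\<Sum>i<n. x i * (P i k * (1 - P i k))) \<le> inn + out"
  proof -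
    have "(\<Sum>i<n. x i * (P i k * (1 - P i k))) \<le> (\<Sum>i<n. (if i = k then x k - x k * P k k else fl i k))"
    proof (intro sum_mono)
      fix i assume "i \<in> {..<n}"
      then have i: "i < n" by simp
      show "x i * (P i k * (1 - P i k)) \<le> (if i = k then x k - x k * P k k else fl i k)"
      proof (cases "i = k")
        case True
        have "P k k * (1 - P k k) \<le> 1 - P k k" using Ple1[OF k k] Pnn k
          by (simp add: mult_left_le_one_le)
        then have "x k * (P k k * (1 - P k k)) \<le> x k * (1 - P k k)" using xnn k by (intro mult_left_mono) auto
        then show ?thesis using True by (simp add: algebra_simps)
      next
        case False
        have "P i k * (1 - P i k) \<le> P i k" using Ple1[OF i k] Pnn i k by (simp add: mult_right_le_one_le)
        then have "x i * (P i k * (1 - P i k)) \<le> x i * P i k" using xnn i by (intro mult_left_mono) auto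
        then show ?thesis using False by (simp add: fl)
      qed
    qed
    also have "(\<Sum>i<n. (if i = k then x k - x k * P k k else fl i k)) = (x k - x k * P k k) + (\<Sum>i\<in>{..<n} - {k}. fl i k)"
      using k by (simp add: sum.remove)
    also have "(\<Sum>i\<in>{..<n} - {k}. fl i k) = inn"
      unfolding inn_def using k by (simp add: sum.remove fl)
    finally show ?thesis using out_eq by simp
  qed
  have mu_eq: "mu = x k + (inn - out)" using inn_eq out_eq by simp
  have "(\<Sum>i<n. x i * P i k)^2 + (\<Sum>i<n. x i * (P i k * (1 - P i k))) + (\<Sum>i<n. x i * P i k)
      \<le> (x k + (inn - out))^2 + x k + 2 * inn"
    using var mu_eq unfolding mu_def[symmetric] by simp
  then show "((\<Sum>i<n. x i * P i k)^2 + (\<Sum>i<n. x i * (P i k * (1 - P i k))) + (\<Sum>i<n. x i * P i k)) / s k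
     \<le> ((x k + ((\<Sum>i<n. fl i k) - (\<Sum>j<n. fl k j)))^2 + x k + 2 * (\<Sum>i<n. fl i k)) / s k"
    unfolding inn_def out_def using spos k by (intro divide_right_mono) auto
qed

lemma flow_main:
  fixes fl c :: "nat \<Rightarrow> nat \<Rightarrow> real" and x s :: "nat \<Rightarrow> real" and N :: "nat \<Rightarrow> nat set"
  assumes Nsub: "\<forall>i<n. N i \<subseteq> {..<n}"
    and Nsym: "\<forall>i<n. \<forall>j<n. j \<in> N i \<longleftrightarrow> i \<in> N j"
    and fl0: "\<forall>i<n. \<forall>j<n. j \<notin> N i \<longrightarrow> fl i j = 0"
    and flprod: "\<forall>i<n. \<forall>j<n. fl i j * fl j i = 0"
    and spos: "\<forall>i<n. s i > 0"
    and bound: "\<forall>i<n. \<forall>j<n. (fl i j)^2 * (real (card (N i)) / s i + real (card (N j)) / s j) \<le> fl i j * c i j"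
    and sign: "\<forall>i<n. \<forall>j<n. fl i j * (2 * (x j / s j - x i / s i + 1 / s j) + c i j) \<le> 0"
    and i0: "i0 < n" "j0 < n" "fl i0 j0 * (2 * (x j0 / s j0 - x i0 / s i0 + 1 / s j0) + c i0 j0) \<le> - V"
  shows "(\<Sum>k<n. ((x k + ((\<Sum>i<n. fl i k) - (\<Sum>j<n. fl k j)))^2 + x k + 2 * (\<Sum>i<n. fl i k)) / s k)
     \<le> (\<Sum>k<n. (x k ^ 2 + x k) / s k) - V"
proof -
  have e: "((x k + ((\<Sum>i<n. fl i k) - (\<Sum>j<n. fl k j)))^2 + x k + 2 * (\<Sum>i<n. fl i k)) / s k
     = (x k ^ 2 + x k) / s k + (2 * x k * ((\<Sum>i<n. fl i k) - (\<Sum>j<n. fl k j)) + 2 * (\<Sum>i<n. fl i k)) / s k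
       + (\<Sum>j<n. fl j k - fl k j)^2 / s k" for k
  proof -
    have g: "((xk + (A - B))^2 + xk + 2 * A) / sk = (xk ^ 2 + xk) / sk + (2 * xk * (A - B) + 2 * A) / sk + (A - B)^2 / sk"
      for xk A B sk :: real
      by (simp add: add_divide_distrib[symmetric] power2_eq_square algebra_simps)
    show ?thesis using g by (simp add: sum_subtractf)
  qed
  have h1: "(\<Sum>k<n. ((x k + ((\<Sum>i<n. fl i k) - (\<Sum>j<n. fl k j)))^2 + x k + 2 * (\<Sum>i<n. fl i k)) / s k)
     = (\<Sum>k<n. (x k ^ 2 + x k) / s k)
       + (\<Sum>k<n. (2 * x k * ((\<Sum>i<n. fl i k) - (\<Sum>j<n. fl k j)) + 2 * (\<Sum>i<n. fl i k)) / s k)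
       + (\<Sum>k<n. (\<Sum>j<n. fl j k - fl k j)^2 / s k)"
    by (simp add: e sum.distrib)
  have h2: "(\<Sum>k<n. (2 * x k * ((\<Sum>i<n. fl i k) - (\<Sum>j<n. fl k j)) + 2 * (\<Sum>i<n. fl i k)) / s k)
      = (\<Sum>i<n. \<Sum>j<n. fl i j * (2 * (x j / s j - x i / s i + 1 / s j)))" by (rule flow_lin)
  have h3: "(\<Sum>k<n. (\<Sum>j<n. fl j k - fl k j)^2 / s k) \<le> (\<Sum>i<n. \<Sum>j<n. fl i j * c i j)"
    by (rule flow_quad[OF assms(1-6)])
  have h4: "(\<Sum>i<n. \<Sum>j<n. fl i j * (2 * (x j / s j - x i / s i + 1 / s j))) + (\<Sum>i<n. \<Sum>j<n. fl i j * c i j)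
      = (\<Sum>i<n. \<Sum>j<n. fl i j * (2 * (x j / s j - x i / s i + 1 / s j) + c i j))"
    by (simp add: sum.distrib distrib_left)
  have h5: "(\<Sum>i<n. \<Sum>j<n. fl i j * (2 * (x j / s j - x i / s i + 1 / s j) + c i j)) \<le> fl i0 j0 * (2 * (x j0 / s j0 - x i0 / s i0 + 1 / s j0) + c i0 j0)"
    using sign i0 by (intro double_sum_le_one_term) auto
  show ?thesis using h1 h2 h3 h4 h5 i0(3) by linarith
qed


lemma pmf_task_dest:
  assumes i: "i < n" and ji: "j \<noteq> i"
    and mp: "\<And>j. j \<in> nbrs n E i \<Longrightarrow> load s x i - load s x j > 1 / s j \<Longrightarrow>
               0 \<le> move_prob n E s \<alpha> x i j \<and> move_prob n E s \<alpha> x i j \<le> 1"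
  shows "pmf (task_dest n E s \<alpha> x i) j =
    (if j \<in> nbrs n E i \<and> load s x i - load s x j > 1 / s j then move_prob n E s \<alpha> x i j else 0)
      / real (deg n E i)"
proof (cases "nbrs n E i = {}")
  case True
  then show ?thesis using ji by (simp add: task_dest_def)
next
  case False
  let ?f = "\<lambda>j'. if load s x i - load s x j' > 1 / s j'
        then map_pmf (\<lambda>b. if b then j' else i) (bernoulli_pmf (move_prob n E s \<alpha> x i j'))
        else return_pmf i"
  have "pmf (task_dest n E s \<alpha> x i) j = (\<Sum>j'\<in>nbrs n E i. pmf (?f j') j) / real (card (nbrs n E i))"
    using False by (simp add: task_dest_def pmf_bind_pmf_of_set)
  also have "(\<Sum>j'\<in>nbrs n E i. pmf (?f j') j)
      = (\<Sum>j'\<in>nbrs n E i. if j' = j \<and> load s x i - load s x j > 1 / s j then move_prob n E s \<alpha> x i j else 0)"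
  proof (intro sum.cong refl)
    fix j' assume j': "j' \<in> nbrs n E i"
    show "pmf (?f j') j = (if j' = j \<and> load s x i - load s x j > 1 / s j then move_prob n E s \<alpha> x i j else 0)"
    proof (cases "load s x i - load s x j' > 1 / s j'")
      case True
      have pre: "(\<lambda>b. if b then j' else i) -` {j} = (if j' = j then {True} else {})"
        using ji by (auto split: if_splits)
      have "pmf (?f j') j = measure (bernoulli_pmf (move_prob n E s \<alpha> x i j')) ((\<lambda>b. if b then j' else i) -` {j})"
        using True by (simp add: pmf_map)
      also have "\<dots> = (if j' = j then move_prob n E s \<alpha> x i j' else 0)"
        using mp[OF j' True] by (auto simp: pre measure_pmf_single)
      finally show ?thesis using True by auto
    next
      case False
      then show ?thesis using ji by auto
    qed
  qed
  also have "\<dots> = (if j \<in> nbrs n E i \<and> load s x i - load s x j > 1 / s j then move_prob n E s \<alpha> x i j else 0)"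
    by (cases "load s x i - load s x j > 1 / s j") (simp_all add: sum.delta)
  finally show ?thesis by (simp add: deg_def)
qed

lemma deg_pos: "j \<in> nbrs n E i \<Longrightarrow> deg n E i \<ge> 1"
  unfolding deg_def using finite_nbrs[of n E i] by (metis One_nat_def Suc_leI card_gt_0_iff empty_iff)

lemma mp_facts:
  assumes j: "j \<in> nbrs n E i" and act: "load s x i - load s x j > 1 / s j"
    and si: "s i > 0" and sj: "s j > 0" and al: "\<alpha> \<ge> 1"
  shows "0 \<le> move_prob n E s \<alpha> x i j \<and> move_prob n E s \<alpha> x i j \<le> 1"
    and "real (x i) * move_prob n E s \<alpha> x i j / real (deg n E i)
         = (load s x i - load s x j) / (real (max (deg n E i) (deg n E j)) * \<alpha> * (1 / s i + 1 / s j))"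
proof -
  define D where "D = load s x i - load s x j"
  define d where "d = real (max (deg n E i) (deg n E j))"
  define di where "di = real (deg n E i)"
  have di1: "di \<ge> 1" using deg_pos[OF j] unfolding di_def by simp
  have ddi: "di \<le> d" unfolding d_def di_def by simp
  have lj: "load s x j \<ge> 0" using sj by (simp add: load_def)
  have Dpos: "D > 0" using act sj unfolding D_def by (smt (verit) divide_pos_pos)
  have li: "load s x i > 0" using Dpos lj unfolding D_def by simp
  then have xi: "real (x i) > 0" using si by (simp add: load_def zero_less_divide_iff)
  have DL: "D \<le> real (x i) / s i" using lj unfolding D_def by (simp add: load_def)
  have ss: "1 / s i + 1 / s j > 0" using si sj by (simp add: add_pos_pos)
  have q: "D / (\<alpha> * (1 / s i + 1 / s j) * real (x i)) \<le> 1"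
  proof -
    have "real (x i) / s i \<le> \<alpha> * (1 / s i + 1 / s j) * real (x i)"
    proof -
      have "real (x i) / s i \<le> (1 / s i + 1 / s j) * real (x i)" using sj xi by (simp add: algebra_simps)
      also have "\<dots> \<le> \<alpha> * ((1 / s i + 1 / s j) * real (x i))"
        using mult_right_mono[OF al, of "(1 / s i + 1 / s j) * real (x i)"] ss xi by simp
      finally show ?thesis by (simp add: mult.assoc)
    qed
    then have "D \<le> \<alpha> * (1 / s i + 1 / s j) * real (x i)" using DL by linarith
    then show ?thesis using al ss xi by (simp add: divide_le_eq_1)
  qed
  have mpdef: "move_prob n E s \<alpha> x i j = di / d * (D / (\<alpha> * (1 / s i + 1 / s j) * real (x i)))"
    unfolding move_prob_def D_def d_def di_def by simp
  have r: "di / d \<le> 1" "di / d \<ge> 0" using di1 ddi by auto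
  have q0: "D / (\<alpha> * (1 / s i + 1 / s j) * real (x i)) \<ge> 0" using Dpos al ss xi by simp
  show "0 \<le> move_prob n E s \<alpha> x i j \<and> move_prob n E s \<alpha> x i j \<le> 1"
    unfolding mpdef using r q q0 by (metis mult_le_one mult_nonneg_nonneg)
  show "real (x i) * move_prob n E s \<alpha> x i j / real (deg n E i)
         = (load s x i - load s x j) / (real (max (deg n E i) (deg n E j)) * \<alpha> * (1 / s i + 1 / s j))"
  proof -
    have gen: "X * (A / B * (DD / (C * S * X))) / A = DD / (B * C * S)"
      if "X > 0" "A > 0" "B > 0" "C > 0" "S > 0" for X A B C S DD :: real
      using that by (simp add: field_simps)
    show ?thesis unfolding mpdef D_def[symmetric] d_def[symmetric] di_def[symmetric]
      using di1 ddi xi al ss by (intro gen) auto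
  qed
qed

lemma int_gap:
  assumes si: "s i = real a * \<epsilon>" and sj: "s j = real b * \<epsilon>" and a: "a > 0" and b: "b > 0"
    and e: "\<epsilon> > 0" and act: "load s x i - load s x j > 1 / s j"
  shows "load s x i - load s x j - 1 / s j \<ge> \<epsilon> / (s i * s j)"
proof -
  define N where "N = int (x i) * int b - (int (x j) + 1) * int a"
  have pos: "real a * real b * \<epsilon> > 0" using a b e by simp
  have eq: "load s x i - load s x j - 1 / s j = real_of_int N / (real a * real b * \<epsilon>)"
    unfolding load_def si sj N_def using a b e by (simp add: field_simps)
  then have "real_of_int N > 0" using act pos by (smt (verit) divide_le_0_iff)
  then have "real_of_int N \<ge> 1" by (simp add: of_int_less_iff[symmetric])
  then have "real_of_int N / (real a * real b * \<epsilon>) \<ge> 1 / (real a * real b * \<epsilon>)"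
    using pos by (intro divide_right_mono) auto
  moreover have "1 / (real a * real b * \<epsilon>) = \<epsilon> / (s i * s j)"
    unfolding si sj using a b e by (simp add: field_simps power2_eq_square)
  ultimately show ?thesis using eq by simp
qed

lemma Qf_nonneg: "\<forall>k<n. s k > 0 \<Longrightarrow> Qf n s y \<ge> 0"
  unfolding Qf_def by (intro sum_nonneg) auto

lemma drift:
  fixes n :: nat and E :: "nat \<Rightarrow> nat \<Rightarrow> bool" and s :: "nat \<Rightarrow> real" and \<epsilon> :: real and x :: state
  assumes E_sym: "\<forall>i j. E i j \<longrightarrow> E j i" and E_irrefl: "\<forall>i. \<not> E i i"
    and eps: "0 < \<epsilon>" "\<epsilon> \<le> 1"
    and speeds: "\<forall>i<n. \<exists>k::nat. k > 0 \<and> s i = real k * \<epsilon>"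
    and min_speed: "(MIN i\<in>{..<n}. s i) = 1"
    and nn: "\<not> nash n E s x"
  shows "(\<integral>y. Qf n s y \<partial>step n E s (4 * s_max n s / \<epsilon>) x)
     \<le> Qf n s x - \<epsilon>^2 / (8 * real (max_deg n E) * s_max n s ^ 3)"
proof -
  define \<alpha> where "\<alpha> = 4 * s_max n s / \<epsilon>"
  define V where "V = \<epsilon>^2 / (8 * real (max_deg n E) * s_max n s ^ 3)"
  define N where "N = nbrs n E"
  define act where "act = (\<lambda>i j. load s x i - load s x j > 1 / s j)"
  define g where "g = (\<lambda>i j. (load s x i - load s x j) / (real (max (deg n E i) (deg n E j)) * \<alpha> * (1 / s i + 1 / s j)))"
  obtain i0 j0 where ij0: "i0 < n" "j0 < n" "E i0 j0" "act i0 j0"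
    using nn unfolding nash_def act_def by auto
  have fin: "finite (s ` {..<n})" by simp
  have ne: "s ` {..<n} \<noteq> {}" using ij0 by auto
  have s1: "1 \<le> s i" if "i < n" for i
    using min_speed Min_le[OF fin, of "s i"] that by auto
  have spos: "\<forall>i<n. s i > 0" using s1 by (meson less_le_trans zero_less_one)
  have sle: "s i \<le> s_max n s" if "i < n" for i
    unfolding s_max_def using Max_ge[OF fin, of "s i"] that by auto
  have smax1: "1 \<le> s_max n s" using s1[OF ij0(1)] sle[OF ij0(1)] by linarith
  have al1: "\<alpha> \<ge> 1"
  proof -
    have "4 * s_max n s / \<epsilon> \<ge> 4 * s_max n s" using eps smax1 by (simp add: le_divide_eq mult_left_le)
    then show ?thesis unfolding \<alpha>_def using smax1 by linarith
  qed
  have degle: "deg n E i \<le> max_deg n E" if "i < n" for i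
    unfolding max_deg_def using that by (intro Max_ge) auto
  have Nmem: "j \<in> N i \<longleftrightarrow> j < n \<and> E i j" for i j unfolding N_def nbrs_def by simp
  define P where "P = (\<lambda>i k. pmf (task_dest n E s \<alpha> x i) k)"
  define fl where "fl = (\<lambda>i k. if i = k then 0 else real (x i) * P i k)"
  have flx: "fl i j = (if j \<in> N i \<and> act i j then g i j else 0)" if "i < n" "j < n" for i j
  proof (cases "i = j")
    case True then show ?thesis using E_irrefl by (simp add: fl_def Nmem)
  next
    case False
    have mp: "0 \<le> move_prob n E s \<alpha> x i j' \<and> move_prob n E s \<alpha> x i j' \<le> 1"
      if "j' \<in> nbrs n E i" "load s x i - load s x j' > 1 / s j'" for j'
      using that spos \<open>i < n\<close> al1 by (intro mp_facts(1)) (auto simp: nbrs_def)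
    have "P i j = (if j \<in> N i \<and> act i j then move_prob n E s \<alpha> x i j else 0) / real (deg n E i)"
      unfolding P_def N_def act_def using pmf_task_dest[OF \<open>i < n\<close>, of j E s x \<alpha>] False mp by auto
    then show ?thesis
      using False mp_facts(2)[of j n E i s x \<alpha>] spos that al1
      by (auto simp: fl_def g_def N_def act_def nbrs_def)
  qed
  have act_term: "g i j * (2 * (real (x j) / s j - real (x i) / s i + 1 / s j) + (load s x i - load s x j) / \<alpha>) \<le> - V"
    if "i < n" "j < n" "j \<in> N i" "act i j" for i j
  proof -
    obtain a where a: "a > 0" "s i = real a * \<epsilon>" using speeds \<open>i < n\<close> by auto
    obtain b where b: "b > 0" "s j = real b * \<epsilon>" using speeds \<open>j < n\<close> by auto
    have gap: "load s x i - load s x j - 1 / s j \<ge> \<epsilon> / (s i * s j)"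
      using int_gap[OF a(2) b(2) a(1) b(1) eps(1)] \<open>act i j\<close> unfolding act_def by blast
    have d1: "1 \<le> real (max (deg n E i) (deg n E j))" using deg_pos[of j n E i] \<open>j \<in> N i\<close> unfolding N_def by simp
    have d2: "real (max (deg n E i) (deg n E j)) \<le> real (max_deg n E)"
      using degle[OF \<open>i < n\<close>] degle[OF \<open>j < n\<close>] by simp
    have "g i j * (2 * (1 / s j - (load s x i - load s x j)) + (load s x i - load s x j) / \<alpha>) \<le> - V"
      unfolding g_def V_def
      by (rule edge_bound[OF s1[OF \<open>i < n\<close>] sle[OF \<open>i < n\<close>] s1[OF \<open>j < n\<close>] sle[OF \<open>j < n\<close>] eps \<alpha>_def d1 d2 gap])
    moreover have "2 * (real (x j) / s j - real (x i) / s i + 1 / s j) + (load s x i - load s x j) / \<alpha>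
        = 2 * (1 / s j - (load s x i - load s x j)) + (load s x i - load s x j) / \<alpha>"
      by (simp add: load_def)
    ultimately show ?thesis by (simp only:)
  qed
  have V0: "V \<ge> 0" unfolding V_def using smax1 by simp
  have fl_nonneg: "g i j \<ge> 0" if "i < n" "j < n" "j \<in> N i" "act i j" for i j
  proof -
    have "load s x i - load s x j > 0" using \<open>act i j\<close> spos \<open>j < n\<close> unfolding act_def
      by (smt (verit) divide_pos_pos)
    moreover have "1 / s i + 1 / s j > 0" using spos that by (simp add: add_pos_pos)
    ultimately show ?thesis unfolding g_def using al1 by simp
  qed
  have e1: "(\<integral>\<^sup>+y. ennreal (Qf n s y) \<partial>step n E s \<alpha> x)
    = ennreal (\<Sum>k<n. ((\<Sum>i<n. real (x i) * P i k)^2 + (\<Sum>i<n. real (x i) * (P i k * (1 - P i k)))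
                 + (\<Sum>i<n. real (x i) * P i k)) / s k)"
    unfolding P_def by (rule step_Q_nn[OF spos])
  have Psum: "\<forall>i<n. (\<Sum>k<n. P i k) = 1"
  proof (intro allI impI)
    fix i assume i: "i < n"
    show "(\<Sum>k<n. P i k) = 1" unfolding P_def by (rule sum_pmf_eq_1[OF finite_lessThan task_dest_set[OF i]])
  qed
  have e2: "(\<Sum>k<n. ((\<Sum>i<n. real (x i) * P i k)^2 + (\<Sum>i<n. real (x i) * (P i k * (1 - P i k))) + (\<Sum>i<n. real (x i) * P i k)) / s k)
     \<le> (\<Sum>k<n. ((real (x k) + ((\<Sum>i<n. fl i k) - (\<Sum>j<n. fl k j)))^2 + real (x k) + 2 * (\<Sum>i<n. fl i k)) / s k)"
    by (rule var_step[OF _ _ Psum spos]) (auto simp: P_def fl_def)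
  have e3: "(\<Sum>k<n. ((real (x k) + ((\<Sum>i<n. fl i k) - (\<Sum>j<n. fl k j)))^2 + real (x k) + 2 * (\<Sum>i<n. fl i k)) / s k)
     \<le> (\<Sum>k<n. (real (x k) ^ 2 + real (x k)) / s k) - V"
  proof (rule flow_main[where N = N and c = "\<lambda>i j. (load s x i - load s x j) / \<alpha>" and ?i0.0 = i0 and ?j0.0 = j0])
    show "\<forall>i<n. N i \<subseteq> {..<n}" by (auto simp: Nmem)
    show "\<forall>i<n. \<forall>j<n. j \<in> N i \<longleftrightarrow> i \<in> N j" using E_sym by (auto simp: Nmem)
    show "\<forall>i<n. \<forall>j<n. j \<notin> N i \<longrightarrow> fl i j = 0" by (auto simp: flx)
    show "\<forall>i<n. \<forall>j<n. fl i j * fl j i = 0"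
    proof (intro allI impI)
      fix i j assume ij: "i < n" "j < n"
      have "\<not> (act i j \<and> act j i)" using spos ij unfolding act_def
        by (smt (verit) divide_pos_pos)
      then show "fl i j * fl j i = 0" using ij by (auto simp: flx)
    qed
    show "\<forall>i<n. s i > 0" by (rule spos)
    show "\<forall>i<n. \<forall>j<n. (fl i j)^2 * (real (card (N i)) / s i + real (card (N j)) / s j) \<le> fl i j * ((load s x i - load s x j) / \<alpha>)"
    proof (intro allI impI)
      fix i j assume ij: "i < n" "j < n"
      show "(fl i j)^2 * (real (card (N i)) / s i + real (card (N j)) / s j) \<le> fl i j * ((load s x i - load s x j) / \<alpha>)"
      proof (cases "j \<in> N i \<and> act i j")
        case False then show ?thesis using ij by (auto simp: flx)
      next
        case True
        define d where "d = real (max (deg n E i) (deg n E j))"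
        have g0: "g i j \<ge> 0" using fl_nonneg ij True by auto
        have d1: "d \<ge> 1" using deg_pos[of j n E i] True unfolding N_def d_def by simp
        have S: "1 / s i + 1 / s j > 0" using spos ij by (simp add: add_pos_pos)
        have "real (card (N i)) / s i + real (card (N j)) / s j \<le> d / s i + d / s j"
          using spos ij unfolding d_def N_def deg_def[symmetric]
          by (intro add_mono divide_right_mono) auto
        also have "\<dots> = d * (1 / s i + 1 / s j)" by (simp add: field_simps)
        finally have c: "real (card (N i)) / s i + real (card (N j)) / s j \<le> d * (1 / s i + 1 / s j)" .
        have "(g i j)^2 * (real (card (N i)) / s i + real (card (N j)) / s j) \<le> (g i j)^2 * (d * (1 / s i + 1 / s j))"
          using c by (intro mult_left_mono) auto
        also have "(g i j)^2 * (d * (1 / s i + 1 / s j)) = g i j * ((load s x i - load s x j) / \<alpha>)"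
        proof -
          have gen: "(DD / (d * a * S))^2 * (d * S) = DD / (d * a * S) * (DD / a)"
            if "d > 0" "a > 0" "S > 0" for DD d a S :: real
            using that by (simp add: field_simps power2_eq_square)
          show ?thesis unfolding g_def d_def[symmetric] using d1 S al1 by (intro gen) auto
        qed
        finally show ?thesis using True ij by (simp add: flx)
      qed
    qed
    show "\<forall>i<n. \<forall>j<n. fl i j * (2 * (real (x j) / s j - real (x i) / s i + 1 / s j) + (load s x i - load s x j) / \<alpha>) \<le> 0"
    proof (intro allI impI)
      fix i j assume ij: "i < n" "j < n"
      show "fl i j * (2 * (real (x j) / s j - real (x i) / s i + 1 / s j) + (load s x i - load s x j) / \<alpha>) \<le> 0"
        using act_term[OF ij] V0 ij by (auto simp: flx)
    qed
    show "i0 < n" "j0 < n" by (rule ij0)+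
    show "fl i0 j0 * (2 * (real (x j0) / s j0 - real (x i0) / s i0 + 1 / s j0) + (load s x i0 - load s x j0) / \<alpha>) \<le> - V"
      using act_term[OF ij0(1,2) _ ij0(4)] ij0 by (simp add: flx Nmem)
  qed
  have e4: "(\<Sum>k<n. (real (x k) ^ 2 + real (x k)) / s k) = Qf n s x"
    unfolding Qf_def by (intro sum.cong refl) (simp add: power2_eq_square algebra_simps)
  have int: "integrable (measure_pmf (step n E s \<alpha> x)) (Qf n s)"
    by (rule integrable_measure_pmf_finite[OF step_finite])
  have e0: "(\<integral>\<^sup>+y. ennreal (Qf n s y) \<partial>step n E s \<alpha> x) = ennreal (\<integral>y. Qf n s y \<partial>step n E s \<alpha> x)"
    by (rule nn_integral_eq_integral[OF int]) (auto simp: Qf_nonneg[OF spos])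
  have R0: "0 \<le> (\<Sum>k<n. ((\<Sum>i<n. real (x i) * P i k)^2 + (\<Sum>i<n. real (x i) * (P i k * (1 - P i k)))
                 + (\<Sum>i<n. real (x i) * P i k)) / s k)"
    using spos by (intro sum_nonneg divide_nonneg_nonneg add_nonneg_nonneg mult_nonneg_nonneg)
       (auto simp: P_def pmf_le_1)
  have I0: "0 \<le> (\<integral>y. Qf n s y \<partial>step n E s \<alpha> x)" using Qf_nonneg[OF spos] by (simp add: integral_nonneg)
  have "(\<integral>y. Qf n s y \<partial>step n E s \<alpha> x) = (\<Sum>k<n. ((\<Sum>i<n. real (x i) * P i k)^2 + (\<Sum>i<n. real (x i) * (P i k * (1 - P i k)))
                 + (\<Sum>i<n. real (x i) * P i k)) / s k)"
    using e0 e1 R0 I0 by simp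
  then show ?thesis
    unfolding \<alpha>_def[symmetric] V_def[symmetric]
    using e2 e3 e4 by linarith
qed


lemma psi_eq: "psi1 n s m y = Qf n s y - (real m ^ 2 / S_tot n s + real m * real n / S_tot n s
     + real n ^ 2 / (4 * S_tot n s) - 1/4 * (\<Sum>i<n. 1 / s i))"
  unfolding psi1_def Qf_def by simp

lemma psi_nonneg:
  assumes spos: "\<forall>i<n. s i > 0" and n: "n \<ge> 1" and sum: "(\<Sum>i<n. y i) = m"
  shows "psi1 n s m y \<ge> 0"
proof -
  define S where "S = S_tot n s"
  have S0: "S > 0" unfolding S_def S_tot_def using spos n by (intro sum_pos) (auto simp: lessThan_empty_iff)
  define a where "a = (\<lambda>i. real (y i) + 1/2)"
  define A where "A = (\<Sum>i<n. a i)"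
  have A: "A = real m + real n / 2" unfolding A_def a_def using sum[symmetric]
    by (simp add: sum.distrib)
  define l where "l = A / S"
  have "0 \<le> (\<Sum>i<n. (a i - l * s i)^2 / s i)" using spos by (intro sum_nonneg) auto
  also have "(\<Sum>i<n. (a i - l * s i)^2 / s i) = (\<Sum>i<n. (a i)^2 / s i - 2 * l * a i + l^2 * s i)"
  proof (intro sum.cong refl)
    fix i assume "i \<in> {..<n}"
    then have "s i > 0" using spos by auto
    then show "(a i - l * s i)^2 / s i = (a i)^2 / s i - 2 * l * a i + l^2 * s i"
      by (simp add: field_simps power2_eq_square)
  qed
  also have "\<dots> = (\<Sum>i<n. (a i)^2 / s i) - 2 * l * A + l^2 * S"
    unfolding A_def S_def S_tot_def by (simp add: sum.distrib sum_subtractf sum_distrib_left)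
  also have "\<dots> = (\<Sum>i<n. (a i)^2 / s i) - A^2 / S"
    unfolding l_def using S0 by (simp add: field_simps power2_eq_square)
  also have "(\<Sum>i<n. (a i)^2 / s i) = Qf n s y + 1/4 * (\<Sum>i<n. 1 / s i)"
  proof -
    have "(\<Sum>i<n. (a i)^2 / s i) = (\<Sum>i<n. real (y i) * (real (y i) + 1) / s i + 1/4 * (1 / s i))"
    proof (intro sum.cong refl)
      fix i
      have "(a i)^2 = real (y i) * (real (y i) + 1) + 1/4" by (simp add: a_def power2_eq_square algebra_simps)
      then have "(a i)^2 / s i = real (y i) * (real (y i) + 1) / s i + (1/4) / s i" by (simp only: add_divide_distrib)
      then show "(a i)^2 / s i = real (y i) * (real (y i) + 1) / s i + 1/4 * (1 / s i)" by simp
    qed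
    then show ?thesis unfolding Qf_def by (simp add: sum.distrib sum_distrib_left)
  qed
  also have "A^2 / S = real m ^ 2 / S + real m * real n / S + real n ^ 2 / (4 * S)"
    unfolding A using S0 by (simp add: field_simps power2_eq_square)
  finally show ?thesis unfolding psi_eq S_def by linarith
qed

primrec histp :: "(state \<Rightarrow> state pmf) \<Rightarrow> state \<Rightarrow> nat \<Rightarrow> state list pmf" where
  "histp K x0 0 = return_pmf [x0]"
| "histp K x0 (Suc t) = histp K x0 t \<bind> (\<lambda>h. map_pmf (\<lambda>y. h @ [y]) (K (last h)))"

lemma histp_set: "h \<in> set_pmf (histp K x0 t) \<Longrightarrow> length h = Suc t \<and> h ! 0 = x0"
proof (induction t arbitrary: h)
  case (Suc t)
  then obtain h' y where "h' \<in> set_pmf (histp K x0 t)" "h = h' @ [y]" by auto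
  with Suc.IH[of h'] show ?case by (auto simp: nth_append)
qed simp

lemma histp_finite: "(\<And>x. finite (set_pmf (K x))) \<Longrightarrow> finite (set_pmf (histp K x0 t))"
  by (induction t) auto

lemma histp_inv:
  assumes "Q x0" "\<And>x y. Q x \<Longrightarrow> y \<in> set_pmf (K x) \<Longrightarrow> Q y"
  shows "h \<in> set_pmf (histp K x0 t) \<Longrightarrow> \<forall>z\<in>set h. Q z"
proof (induction t arbitrary: h)
  case 0 then show ?case using assms by simp
next
  case (Suc t)
  then obtain h' y where h': "h' \<in> set_pmf (histp K x0 t)" "h = h' @ [y]" "y \<in> set_pmf (K (last h'))" by auto
  have "h' \<noteq> []" using histp_set[OF h'(1)] by auto
  then have "last h' \<in> set h'" by simp
  then show ?case using Suc.IH[OF h'(1)] h' assms(2) by auto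
qed

lemma pmf_histp_Suc: "pmf (histp K x0 (Suc t)) (h @ [y]) = pmf (histp K x0 t) h * pmf (K (last h)) y"
proof -
  have "pmf (histp K x0 (Suc t)) (h @ [y]) = (\<integral>h'. pmf (map_pmf (\<lambda>y. h' @ [y]) (K (last h'))) (h @ [y]) \<partial>histp K x0 t)"
    by (simp add: pmf_bind)
  also have "\<dots> = (\<integral>h'. indicator {h} h' * pmf (K (last h)) y \<partial>histp K x0 t)"
  proof (intro Bochner_Integration.integral_cong refl)
    fix h' show "pmf (map_pmf (\<lambda>y. h' @ [y]) (K (last h'))) (h @ [y]) = indicator {h} h' * pmf (K (last h)) y"
    proof (cases "h' = h")
      case True
      have "inj (\<lambda>y. h @ [y])" by (auto simp: inj_def)
      then show ?thesis using True pmf_map_inj'[of "\<lambda>y. h @ [y]" "K (last h)" y] by simp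
    next
      case False
      then have "h @ [y] \<notin> (\<lambda>y. h' @ [y]) ` set_pmf (K (last h'))" by auto
      then show ?thesis using False by (simp add: pmf_map_outside)
    qed
  qed
  also have "\<dots> = pmf (histp K x0 t) h * pmf (K (last h)) y"
    by (simp add: measure_pmf_single)
  finally show ?thesis .
qed

definition tau :: "(state \<Rightarrow> bool) \<Rightarrow> state list \<Rightarrow> nat" where
  "tau P h = (if \<exists>k<length h. P (h ! k) then LEAST k. k < length h \<and> P (h ! k) else length h - 1)"

definition Gv :: "(state \<Rightarrow> real) \<Rightarrow> (state \<Rightarrow> bool) \<Rightarrow> real \<Rightarrow> state list \<Rightarrow> ennreal" where
  "Gv psi P V h = ennreal (psi (h ! tau P h) + real (tau P h) * V)"

lemma tau_stop:
  assumes ex: "\<exists>k<length h. P (h ! k)"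
  shows "tau P (h @ [y]) = tau P h" "tau P h < length h"
proof -
  define k0 where "k0 = (LEAST k. k < length h \<and> P (h ! k))"
  have k0: "k0 < length h \<and> P (h ! k0)" unfolding k0_def using ex by (rule LeastI_ex)
  have k0le: "k0 \<le> k" if "k < length h" "P (h ! k)" for k
    unfolding k0_def using that by (intro Least_le) auto
  have "(LEAST k. k < length (h @ [y]) \<and> P ((h @ [y]) ! k)) = k0"
  proof (rule Least_equality)
    show "k0 < length (h @ [y]) \<and> P ((h @ [y]) ! k0)" using k0 by (simp add: nth_append)
    fix k assume k: "k < length (h @ [y]) \<and> P ((h @ [y]) ! k)"
    show "k0 \<le> k"
    proof (cases "k < length h")
      case True then show ?thesis using k k0le by (simp add: nth_append)
    next
      case False then show ?thesis using k0 by simp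
    qed
  qed
  moreover have "\<exists>k<length (h @ [y]). P ((h @ [y]) ! k)" using k0 by (auto simp: nth_append intro!: exI[of _ k0])
  ultimately show "tau P (h @ [y]) = tau P h" unfolding tau_def k0_def using ex by simp
  show "tau P h < length h" unfolding tau_def using ex k0 k0_def by simp
qed

lemma tau_go:
  assumes ne: "h \<noteq> []" and nex: "\<not> (\<exists>k<length h. P (h ! k))"
  shows "tau P (h @ [y]) = length h" "tau P h = length h - 1"
proof -
  show "tau P h = length h - 1" using nex unfolding tau_def by (intro if_not_P)
  show "tau P (h @ [y]) = length h"
  proof (cases "P y")
    case True
    have ex: "\<exists>k<length (h @ [y]). P ((h @ [y]) ! k)" using True by (auto intro!: exI[of _ "length h"])
    have "(LEAST k. k < length (h @ [y]) \<and> P ((h @ [y]) ! k)) = length h"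
    proof (rule Least_equality)
      show "length h < length (h @ [y]) \<and> P ((h @ [y]) ! length h)" using True by simp
      fix k assume k: "k < length (h @ [y]) \<and> P ((h @ [y]) ! k)"
      show "length h \<le> k"
      proof (rule ccontr)
        assume "\<not> length h \<le> k"
        then show False using k nex by (auto simp: nth_append)
      qed
    qed
    then show ?thesis unfolding tau_def using ex by simp
  next
    case False
    have "\<not> (\<exists>k<length (h @ [y]). P ((h @ [y]) ! k))"
    proof
      assume "\<exists>k<length (h @ [y]). P ((h @ [y]) ! k)"
      then obtain k where "k < length (h @ [y])" "P ((h @ [y]) ! k)" by blast
      then show False using False nex by (cases "k < length h") (auto simp: nth_append)
    qed
    then show ?thesis unfolding tau_def by (subst if_not_P) simp_all
  qed
qed

lemma Gv_step:
  fixes K :: "state \<Rightarrow> state pmf"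
  assumes ne: "h \<noteq> []"
    and fin: "finite (set_pmf (K (last h)))"
    and nonneg: "\<And>y. y \<in> set_pmf (K (last h)) \<Longrightarrow> psi y \<ge> 0"
    and V0: "V \<ge> 0"
    and drift: "\<not> P (last h) \<Longrightarrow> (\<integral>y. psi y \<partial>K (last h)) \<le> psi (last h) - V"
  shows "(\<integral>\<^sup>+y. Gv psi P V (h @ [y]) \<partial>K (last h)) \<le> Gv psi P V h"
proof (cases "\<exists>k<length h. P (h ! k)")
  case True
  have "Gv psi P V (h @ [y]) = Gv psi P V h" for y
    unfolding Gv_def using tau_stop(1)[OF True, of y] tau_stop(2)[OF True] by (simp add: nth_append)
  then show ?thesis by (simp add: measure_pmf.emeasure_space_1)
next
  case False
  define L where "L = length h"
  have L1: "L \<ge> 1" using ne unfolding L_def by (cases h) auto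
  have lastn: "h ! (L - 1) = last h" unfolding L_def using ne by (simp add: last_conv_nth)
  have notP: "\<not> P (last h)" using False L1 lastn unfolding L_def by (metis diff_less zero_less_one less_le_trans)
  have g1: "Gv psi P V (h @ [y]) = ennreal (psi y + real L * V)" for y
    unfolding Gv_def using tau_go(1)[OF ne False, of y] unfolding L_def by simp
  have g2: "Gv psi P V h = ennreal (psi (last h) + real (L - 1) * V)"
    unfolding Gv_def using tau_go(2)[OF ne False] lastn unfolding L_def by simp
  have int: "integrable (measure_pmf (K (last h))) (\<lambda>y. psi y + real L * V)"
    by (rule integrable_measure_pmf_finite[OF fin])
  have "(\<integral>\<^sup>+y. Gv psi P V (h @ [y]) \<partial>K (last h)) = (\<integral>\<^sup>+y. ennreal (psi y + real L * V) \<partial>K (last h))"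
    by (simp add: g1)
  also have "\<dots> = ennreal (\<integral>y. psi y + real L * V \<partial>K (last h))"
    by (rule nn_integral_eq_integral[OF int]) (use nonneg V0 in \<open>auto simp: AE_measure_pmf_iff\<close>)
  also have "(\<integral>y. psi y + real L * V \<partial>K (last h)) = (\<integral>y. psi y \<partial>K (last h)) + real L * V"
    using integrable_measure_pmf_finite[OF fin, of psi] by (simp add: measure_pmf.prob_space)
  also have "\<dots> \<le> psi (last h) + real (L - 1) * V"
    using drift[OF notP] L1 by (simp add: of_nat_diff algebra_simps)
  finally show ?thesis unfolding g2 by (simp add: ennreal_leI)
qed

lemma hist_mono:
  assumes "\<And>h. h \<in> set_pmf (histp K x0 t) \<Longrightarrow> (\<integral>\<^sup>+y. G (h @ [y]) \<partial>K (last h)) \<le> G h"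
  shows "(\<integral>\<^sup>+h. G h \<partial>histp K x0 (Suc t)) \<le> (\<integral>\<^sup>+h. G h \<partial>histp K x0 t)"
  using assms by (simp add: nn_integral_bind_pmf) (intro nn_integral_mono_AE, simp add: AE_measure_pmf_iff)


lemma A_sets:
  fixes M :: "'w measure" and X :: "nat \<Rightarrow> 'w \<Rightarrow> state" and t :: nat
  assumes X_meas: "\<forall>t. X t \<in> measurable M (count_space UNIV)"
  shows "{\<omega> \<in> space M. \<forall>k\<le>t. X k \<omega> = hf k} \<in> sets M"
proof -
  have "{\<omega> \<in> space M. \<forall>k\<le>t. X k \<omega> = hf k} = (\<Inter>k\<in>{..t}. X k -` {hf k} \<inter> space M)"
    using atMost_iff[of 0 t] by blast
  also have "\<dots> \<in> sets M"
    using X_meas by (intro sets.finite_INT) (auto intro: measurable_sets)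
  finally show ?thesis .
qed

lemma A_measure:
  fixes M :: "'w measure" and X :: "nat \<Rightarrow> 'w \<Rightarrow> state"
  assumes P: "prob_space M"
    and X_init: "\<forall>\<omega>\<in>space M. X 0 \<omega> = x0"
    and X_markov: "\<forall>t (h :: nat \<Rightarrow> state) y.
        measure M {\<omega> \<in> space M. (\<forall>k\<le>t. X k \<omega> = h k) \<and> X (Suc t) \<omega> = y}
        = measure M {\<omega> \<in> space M. \<forall>k\<le>t. X k \<omega> = h k} * pmf (K (h t)) y"
  shows "length h = Suc t \<Longrightarrow> measure M {\<omega> \<in> space M. \<forall>k\<le>t. X k \<omega> = h ! k} = pmf (histp K x0 t) h"
proof (induction t arbitrary: h)
  case 0
  then obtain a where h: "h = [a]" by (cases h) auto
  show ?case
  proof (cases "a = x0")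
    case True
    have "{\<omega> \<in> space M. \<forall>k\<le>0. X k \<omega> = h ! k} = space M" using X_init True h by auto
    then show ?thesis using True h prob_space.prob_space[OF P] by simp
  next
    case False
    have e: "{\<omega> \<in> space M. \<forall>k\<le>0. X k \<omega> = h ! k} = {}" using X_init False h by auto
    show ?thesis using False h by (subst e) simp
  qed
next
  case (Suc t)
  obtain h' y where h: "h = h' @ [y]" using Suc.prems by (metis length_Suc_conv_rev)
  have lh': "length h' = Suc t" using Suc.prems h by simp
  have set1: "{\<omega> \<in> space M. \<forall>k\<le>Suc t. X k \<omega> = h ! k}
      = {\<omega> \<in> space M. (\<forall>k\<le>t. X k \<omega> = (\<lambda>k. h ! k) k) \<and> X (Suc t) \<omega> = y}"
    using h lh' by (auto simp: nth_append le_Suc_eq)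
  have set2: "{\<omega> \<in> space M. \<forall>k\<le>t. X k \<omega> = (\<lambda>k. h ! k) k} = {\<omega> \<in> space M. \<forall>k\<le>t. X k \<omega> = h' ! k}"
    using h lh' by (auto simp: nth_append)
  have lt: "h ! t = last h'"
    using h lh' by (cases h' rule: rev_cases) (auto simp: nth_append)
  have "measure M {\<omega> \<in> space M. \<forall>k\<le>Suc t. X k \<omega> = h ! k}
      = measure M {\<omega> \<in> space M. \<forall>k\<le>t. X k \<omega> = h' ! k} * pmf (K (last h')) y"
    unfolding set1 using X_markov[rule_format, of t "\<lambda>k. h ! k" y] set2 lt by simp
  also have "\<dots> = pmf (histp K x0 t) h' * pmf (K (last h')) y" using Suc.IH[OF lh'] by simp
  also have "\<dots> = pmf (histp K x0 (Suc t)) h" unfolding h by (rule pmf_histp_Suc[symmetric])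
  finally show ?case .
qed

theorem corollary29:
  fixes n m :: nat and E :: "nat \<Rightarrow> nat \<Rightarrow> bool" and s :: "nat \<Rightarrow> real" and \<epsilon> :: real
    and M :: "'w measure" and X :: "nat \<Rightarrow> 'w \<Rightarrow> state" and x0 :: state
  assumes n_pos: "n \<ge> 1"
    and E_sym: "\<forall>i j. E i j \<longrightarrow> E j i"
    and E_irrefl: "\<forall>i. \<not> E i i"
    and eps: "0 < \<epsilon>" "\<epsilon> \<le> 1"
    and speeds: "\<forall>i<n. \<exists>k::nat. k > 0 \<and> s i = real k * \<epsilon>"
    and min_speed: "(MIN i\<in>{..<n}. s i) = 1"
    and tasks: "(\<Sum>i<n. x0 i) = m"
    and P: "prob_space M"
    and X_meas: "\<forall>t. X t \<in> measurable M (count_space UNIV)"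
    and X_init: "\<forall>\<omega>\<in>space M. X 0 \<omega> = x0"
    and X_markov: "\<forall>t (h :: nat \<Rightarrow> state) y.
        measure M {\<omega> \<in> space M. (\<forall>k\<le>t. X k \<omega> = h k) \<and> X (Suc t) \<omega> = y}
        = measure M {\<omega> \<in> space M. \<forall>k\<le>t. X k \<omega> = h k}
          * pmf (step n E s (4 * s_max n s / \<epsilon>) (h t)) y"
  shows "(\<integral>\<^sup>+\<omega>. Z_stop n E s m (\<epsilon>\<^sup>2 / (8 * real (max_deg n E) * s_max n s ^ 3)) (\<lambda>t. X t \<omega>) \<partial>M)
         \<le> ennreal (psi1 n s m x0)"
proof -
  define \<alpha> where "\<alpha> = 4 * s_max n s / \<epsilon>"
  define V where "V = \<epsilon>\<^sup>2 / (8 * real (max_deg n E) * s_max n s ^ 3)"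
  define K where "K = step n E s \<alpha>"
  define \<psi> where "\<psi> = psi1 n s m"
  define Pn where "Pn = nash n E s"
  define G where "G = Gv \<psi> Pn V"
  define hist where "hist = histp K x0"
  define A where "A = (\<lambda>t (h :: state list). {\<omega> \<in> space M. \<forall>k\<le>t. X k \<omega> = h ! k})"
  define S where "S = (\<lambda>t. set_pmf (hist t))"
  define F where "F = (\<lambda>t \<omega>. \<Sum>h\<in>S t. G h * indicator (A t h) \<omega>)"
  define H where "H = (\<lambda>t \<omega>. map (\<lambda>k. X k \<omega>) [0..<Suc t])"
  define C where "C = real m ^ 2 / S_tot n s + real m * real n / S_tot n s
     + real n ^ 2 / (4 * S_tot n s) - 1/4 * (\<Sum>i<n. 1 / s i)"
  interpret prob_space M by (rule P)
  have fin: "finite (s ` {..<n})" by simp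
  have s1: "1 \<le> s i" if "i < n" for i
    using min_speed Min_le[OF fin, of "s i"] that by auto
  have spos: "\<forall>i<n. s i > 0" using s1 by (meson less_le_trans zero_less_one)
  have smax1: "1 \<le> s_max n s"
  proof -
    have "s 0 \<le> s_max n s" unfolding s_max_def using n_pos by (intro Max_ge) auto
    then show ?thesis using s1[of 0] n_pos by linarith
  qed
  have V0: "V \<ge> 0" unfolding V_def using smax1 by simp
  have psiC: "\<psi> y = Qf n s y - C" for y unfolding \<psi>_def C_def by (rule psi_eq)
  have Kfin: "finite (set_pmf (K x))" for x unfolding K_def by (rule step_finite)
  have Sfin: "finite (S t)" for t unfolding S_def hist_def by (rule histp_finite[OF Kfin])
  have Slen: "length h = Suc t" if "h \<in> S t" for h t using histp_set that unfolding S_def hist_def by blast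
  have Ssum: "\<forall>z\<in>set h. (\<Sum>i<n. z i) = m" if "h \<in> S t" for h t
  proof -
    have pres: "(\<Sum>i<n. y i) = m" if "(\<Sum>i<n. x i) = m" "y \<in> set_pmf (K x)" for x y
      using step_set[of y n E s \<alpha> x] that unfolding K_def by simp
    have hh: "h \<in> set_pmf (histp K x0 t)" using that unfolding S_def hist_def .
    show ?thesis
    proof (rule histp_inv[where Q = "\<lambda>z. (\<Sum>i<n. z i) = m" and K = K, OF _ _ hh])
      show "(\<Sum>i<n. x0 i) = m" by (rule tasks)
      fix x y assume "(\<Sum>i<n. x i) = m" "y \<in> set_pmf (K x)"
      then show "(\<Sum>i<n. y i) = m" by (rule pres)
    qed
  qed
  have A_in: "A t h \<in> sets M" for t h unfolding A_def by (rule A_sets[OF X_meas])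
  have A_meas: "measure M (A t h) = pmf (hist t) h" if "h \<in> S t" for t h
    unfolding A_def hist_def
    by (rule A_measure[OF P X_init X_markov[unfolded K_def[symmetric] \<alpha>_def[symmetric]]]) (use Slen that in auto)
  have disj: "A t h \<inter> A t h' = {}" if "h \<in> S t" "h' \<in> S t" "h \<noteq> h'" for t h h'
  proof (rule ccontr)
    assume "A t h \<inter> A t h' \<noteq> {}"
    then obtain \<omega> where w: "\<omega> \<in> A t h" "\<omega> \<in> A t h'" by blast
    have "h = h'"
    proof (rule nth_equalityI)
      show "length h = length h'" using Slen that by simp
      fix k assume "k < length h"
      then have "k \<le> t" using Slen that by simp
      then show "h ! k = h' ! k" using w unfolding A_def by auto
    qed
    then show False using that by simp
  qed
  have Hw: "H t \<omega> = h" if "\<omega> \<in> A t h" "h \<in> S t" for t \<omega> h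
  proof (rule nth_equalityI)
    show "length (H t \<omega>) = length h" using Slen that unfolding H_def by simp
    fix k assume "k < length (H t \<omega>)"
    then have "k \<le> t" unfolding H_def by simp
    then show "H t \<omega> ! k = h ! k" using that(1) unfolding A_def H_def by (auto simp del: upt_Suc)
  qed
  have AE1: "AE \<omega> in M. \<exists>h\<in>S t. \<omega> \<in> A t h" for t
  proof -
    have U: "(\<Union>h\<in>S t. A t h) \<in> sets M" using Sfin A_in by auto
    have "prob (\<Union>h\<in>S t. A t h) = (\<Sum>h\<in>S t. prob (A t h))"
      using Sfin A_in disj by (intro measure_finite_Union) (auto simp: disjoint_family_on_def emeasure_eq_measure)
    also have "\<dots> = (\<Sum>h\<in>S t. pmf (hist t) h)" using A_meas by simp
    also have "\<dots> = 1" unfolding S_def by (rule sum_pmf_eq_1) (use Sfin S_def in auto)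
    finally have "AE \<omega> in M. \<omega> \<in> (\<Union>h\<in>S t. A t h)" using AE_in_set_eq_1[OF U] by simp
    then show ?thesis by auto
  qed
  have Fval: "F t \<omega> = G h" if "h \<in> S t" "\<omega> \<in> A t h" for t \<omega> h
  proof -
    have "F t \<omega> = G h * indicator (A t h) \<omega> + (\<Sum>h'\<in>S t - {h}. G h' * indicator (A t h') \<omega>)"
      unfolding F_def by (rule sum.remove[OF Sfin that(1)])
    also have "(\<Sum>h'\<in>S t - {h}. G h' * indicator (A t h') \<omega>) = 0"
      using disj that by (intro sum.neutral) (auto simp: indicator_def)
    finally show ?thesis using that by simp
  qed
  have AE2: "AE \<omega> in M. \<forall>t. F t \<omega> = G (H t \<omega>)"
  proof (subst AE_all_countable, intro allI)
    fix t show "AE \<omega> in M. F t \<omega> = G (H t \<omega>)"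
      using AE1[of t] by eventually_elim (use Fval Hw in auto)
  qed
  have Fmeas: "F t \<in> borel_measurable M" for t
    unfolding F_def using A_in by (intro borel_measurable_sum borel_measurable_times borel_measurable_const borel_measurable_indicator) auto
  have intF: "(\<integral>\<^sup>+\<omega>. F t \<omega> \<partial>M) = (\<integral>\<^sup>+h. G h \<partial>hist t)" for t
  proof -
    have "(\<integral>\<^sup>+\<omega>. F t \<omega> \<partial>M) = (\<Sum>h\<in>S t. \<integral>\<^sup>+\<omega>. G h * indicator (A t h) \<omega> \<partial>M)"
      unfolding F_def using A_in by (intro nn_integral_sum) (auto intro!: borel_measurable_times borel_measurable_indicator)
    also have "\<dots> = (\<Sum>h\<in>S t. G h * ennreal (pmf (hist t) h))"
      using A_in A_meas by (intro sum.cong refl) (simp add: nn_integral_cmult_indicator emeasure_eq_measure)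
    also have "\<dots> = (\<integral>\<^sup>+h. G h \<partial>hist t)"
      unfolding S_def by (rule nn_integral_measure_pmf_finite[symmetric]) (use Sfin S_def in auto)
    finally show ?thesis .
  qed
  have drift_last: "(\<integral>y. \<psi> y \<partial>K z) \<le> \<psi> z - V" if "\<not> Pn z" for z
  proof -
    have "(\<integral>y. \<psi> y \<partial>K z) = (\<integral>y. Qf n s y \<partial>K z) - C"
      unfolding psiC using integrable_measure_pmf_finite[OF Kfin[of z], of "Qf n s"]
      by (simp add: prob_space_measure_pmf prob_space.prob_space)
    also have "(\<integral>y. Qf n s y \<partial>K z) \<le> Qf n s z - V"
      unfolding K_def \<alpha>_def V_def
      by (rule drift[OF E_sym E_irrefl eps speeds min_speed that[unfolded Pn_def]])
    finally show ?thesis unfolding psiC by simp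
  qed
  have Gbound: "(\<integral>\<^sup>+h. G h \<partial>hist t) \<le> ennreal (\<psi> x0)" for t
  proof (induction t)
    case 0
    have "tau Pn [x0] = 0" unfolding tau_def by auto
    then show ?case unfolding hist_def G_def Gv_def by simp
  next
    case (Suc t)
    have "(\<integral>\<^sup>+h. G h \<partial>hist (Suc t)) \<le> (\<integral>\<^sup>+h. G h \<partial>hist t)"
      unfolding hist_def
    proof (rule hist_mono)
      fix h assume h: "h \<in> set_pmf (histp K x0 t)"
      then have hS: "h \<in> S t" unfolding S_def hist_def .
      have ne: "h \<noteq> []" using Slen[OF hS] by auto
      have lsum: "(\<Sum>i<n. last h i) = m" using Ssum[OF hS] ne by simp
      show "(\<integral>\<^sup>+y. G (h @ [y]) \<partial>K (last h)) \<le> G h"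
        unfolding G_def
      proof (rule Gv_step[OF ne Kfin _ V0])
        fix y assume "y \<in> set_pmf (K (last h))"
        then have "(\<Sum>i<n. y i) = m" using step_set lsum unfolding K_def by metis
        then show "\<psi> y \<ge> 0" unfolding \<psi>_def using psi_nonneg spos n_pos by blast
      next
        assume "\<not> Pn (last h)"
        then show "(\<integral>y. \<psi> y \<partial>K (last h)) \<le> \<psi> (last h) - V" by (rule drift_last)
      qed
    qed
    then show ?case using Suc.IH by (rule order.trans)
  qed
  have ptwise: "Z_stop n E s m V (\<lambda>t. X t \<omega>) \<le> liminf (\<lambda>t. F t \<omega>)"
    if w: "\<omega> \<in> space M" "\<forall>t. F t \<omega> = G (H t \<omega>)" for \<omega>
  proof (cases "\<exists>t. nash n E s (X t \<omega>)")
    case True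
    define T where "T = (LEAST t. nash n E s (X t \<omega>))"
    have T: "nash n E s (X T \<omega>)" unfolding T_def using True by (rule LeastI_ex)
    have Tle: "T \<le> k" if "nash n E s (X k \<omega>)" for k unfolding T_def using that by (rule Least_le)
    have Z: "Z_stop n E s m V (\<lambda>t. X t \<omega>) = ennreal (\<psi> (X T \<omega>) + real T * V)"
      unfolding Z_stop_def \<psi>_def T_def using True by simp
    have Hn: "H t \<omega> ! k = X k \<omega>" if "k < Suc t" for t k
      unfolding H_def using that by (simp del: upt_Suc)
    have ev: "F t \<omega> = Z_stop n E s m V (\<lambda>t. X t \<omega>)" if "T \<le> t" for t
    proof -
      have ex: "\<exists>k<length (H t \<omega>). Pn (H t \<omega> ! k)"
        using that T Hn[of T t] unfolding Pn_def H_def by (auto intro!: exI[of _ T] simp del: upt_Suc)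
      have "(LEAST k. k < length (H t \<omega>) \<and> Pn (H t \<omega> ! k)) = T"
      proof (rule Least_equality)
        show "T < length (H t \<omega>) \<and> Pn (H t \<omega> ! T)" using that T Hn[of T t] unfolding Pn_def H_def by (simp del: upt_Suc)
        fix k assume a: "k < length (H t \<omega>) \<and> Pn (H t \<omega> ! k)"
        have "k < Suc t" using a unfolding H_def by simp
        then have "Pn (X k \<omega>)" using a Hn[of k t] by simp
        then show "T \<le> k" using Tle unfolding Pn_def by simp
      qed
      then have "tau Pn (H t \<omega>) = T" unfolding tau_def using ex by simp
      then show ?thesis using w(2) Z Hn[of T t] that unfolding G_def Gv_def by simp
    qed
    show ?thesis
      by (rule Liminf_bounded) (use ev in \<open>auto simp: eventually_sequentially intro!: exI[of _ T]\<close>)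
  next
    case False
    have Z: "Z_stop n E s m V (\<lambda>t. X t \<omega>) = \<infinity>" unfolding Z_stop_def using False by simp
    have "\<not> nash n E s (X 0 \<omega>)" using False by blast
    then obtain i j where ij: "i < n" "j < n" "E i j" unfolding nash_def by auto
    have "deg n E i \<ge> 1" using ij by (intro deg_pos) (auto simp: nbrs_def)
    moreover have "deg n E i \<le> max_deg n E" unfolding max_deg_def using ij by (intro Max_ge) auto
    ultimately have md: "real (max_deg n E) \<ge> 1" by simp
    have Vpos: "V > 0" unfolding V_def using md smax1 eps by simp
    have Hn: "H t \<omega> ! k = X k \<omega>" if "k < Suc t" for t k
      unfolding H_def using that by (simp del: upt_Suc)
    have Fval2: "F t \<omega> = ennreal (\<psi> (X t \<omega>) + real t * V)" for t
    proof -
      have nex: "\<not> (\<exists>k<length (H t \<omega>). Pn (H t \<omega> ! k))"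
        using False Hn unfolding Pn_def H_def by (auto simp del: upt_Suc)
      then have "tau Pn (H t \<omega>) = t" unfolding tau_def by (subst if_not_P) (simp_all add: H_def del: upt_Suc)
      then show ?thesis using w(2) Hn[of t t] unfolding G_def Gv_def by simp
    qed
    have psilow: "\<psi> z \<ge> - C" for z using psiC[of z] Qf_nonneg[OF spos, of z] by simp
    have "\<infinity> \<le> liminf (\<lambda>t. F t \<omega>)"
    proof (subst le_Liminf_iff, intro allI impI)
      fix y :: ennreal assume "y < \<infinity>"
      then obtain r where r: "r \<ge> 0" "y = ennreal r" using less_top_ennreal by auto
      obtain N :: nat where N: "real N \<ge> (r + C + 1) / V" using real_arch_simple by blast
      show "\<forall>\<^sub>F t in sequentially. y < F t \<omega>"
        unfolding eventually_sequentially
      proof (intro exI[of _ N] allI impI)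
        fix t assume "N \<le> t"
        then have "real t * V \<ge> real N * V" using V0 by (intro mult_right_mono) auto
        moreover have "real N * V \<ge> r + C + 1" using N Vpos by (simp add: field_simps)
        ultimately have "r < \<psi> (X t \<omega>) + real t * V" using psilow[of "X t \<omega>"] by linarith
        then show "y < F t \<omega>" unfolding Fval2 r(2) using r(1) by (simp add: ennreal_less_iff)
      qed
    qed
    then show ?thesis unfolding Z by simp
  qed
  have "(\<integral>\<^sup>+\<omega>. Z_stop n E s m V (\<lambda>t. X t \<omega>) \<partial>M) \<le> (\<integral>\<^sup>+\<omega>. liminf (\<lambda>t. F t \<omega>) \<partial>M)"
  proof (rule nn_integral_mono_AE)
    show "AE \<omega> in M. Z_stop n E s m V (\<lambda>t. X t \<omega>) \<le> liminf (\<lambda>t. F t \<omega>)"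
      by (rule AE_mp[OF AE2], rule AE_I2, intro impI, rule ptwise; assumption)
  qed
  also have "\<dots> \<le> liminf (\<lambda>t. \<integral>\<^sup>+\<omega>. F t \<omega> \<partial>M)"
    by (rule nn_integral_liminf[OF Fmeas])
  also have "\<dots> \<le> ennreal (\<psi> x0)"
    by (rule Liminf_le) (auto simp: intF Gbound)
  finally show ?thesis unfolding V_def \<psi>_def .
qed

end
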